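(* Consider the multi-machine power system in the context, with $\omega_0>0$, $i_r^*\in\mathbb{R}^n_{>0}$, and a set-point $\theta_{\mathsf{dq}}\in\mathbb{T}^n$. The unique control action $u=u^*(\theta_{\mathsf{dq}})=(u_m^*,u_r^* )$ which renders $\Gamma|_{\theta_{\mathsf{dq}}}$ invariant is given by $$u_r^*(\theta_{\mathsf{dq}})=R_r i_r^*,\qquad u_m^*(\theta_{\mathsf{dq}})=\big(D+\mathcal{K}_{\mathsf{net}}(\theta_{\mathsf{dq}})\big)\omega_0\mathbb{1},$$ where $\mathcal{K}_{\mathsf{net}}(\theta_{\mathsf{dq}})=I_r^*(L_m\otimes\mathsf{e}_2^\top)\mathbf{R}_{\theta_{\mathsf{dq}}}^\top\mathbf{Y}_{\mathsf{net}}\mathbf{R}_{\theta_{\mathsf{dq}}}(L_m\otimes\mathsf{e}_2)I_r^*$ and $\mathbf{Y}_{\mathsf{net}}=\big(Z_s+(Y_{\mathsf c}+\mathcal{L}_{\mathsf t})^{-1}\big)^{-1}$ is the equivalent admittance of the three-phase electrical subsystem.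
   Context: Notation: $j=\begin{bsmallmatrix}0&-1\\1&0\end{bsmallmatrix}$, $I_2$ the $2\times2$ identity, $\mathsf{e}_1=(1,0)^\top$, $\mathsf{e}_2=(0,1)^\top$, $\mathbb{1}\in\mathbb{R}^n$ the all-ones vector, $\otimes$ the Kronecker product, $\boldsymbol{j}=I\otimes j$. For $\theta\in\mathbb{T}^n$, $R_{\theta_i}$ is the $2\times 2$ rotation by $\theta_i$ and $\mathbf{R}_\theta=\mathrm{blkdiag}(R_{\theta_1},\dots,R_{\theta_n})$. System: $n$ machines, $m$ lines, connected undirected graph with signed incidence matrix $E\in\mathbb{R}^{n\times m}$, $\mathbf{E}=E\otimes I_2$. Parameters (all scalar entries positive): $M,D,R_r,L_r,L_m$ diagonal $n\times n$; $R_s,L_s,C,G$ of the form $\mathrm{diag}(\cdot)\otimes I_2$ in $\mathbb{R}^{2n\times2n}$; $L_{\mathsf t},R_{\mathsf t}$ of the form $\mathrm{diag}(\cdot)\otimes I_2$ in $\mathbb{R}^{2m\times 2m}$; $L_{s_i}L_{r_i}-L_{m_i}^2>0$. State $x=(M\omega,\theta,\lambda_r,\lambda_s,Cv,L_{\mathsf t}i_{\mathsf t})\in\mathcal{X}=\mathbb{R}^n\times\mathbb{T}^n\times\mathbb{R}^n\times\mathbb{R}^{2n}\times\mathbb{R}^{2n}\times\mathbb{R}^{2m}$, input $u=(u_m,u_r)$. Currents are defined by $\lambda_s=L_s i_s+\mathbf{R}_\theta(L_m\otimes\mathsf{e}_1)i_r$, $\lambda_r=L_r i_r+(L_m\otimes\mathsf{e}_1^\top)\mathbf{R}_\theta^\top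 i_s$; $\tau_e=-I_r(L_m\otimes\mathsf{e}_2^\top)\mathbf{R}_\theta^\top i_s$, $I_r=\mathrm{diag}(i_{r_i})$. Dynamics: $M\dot\omega=-D\omega-\tau_e+u_m$, $\dot\theta=\omega$, $\dot\lambda_r=-R_r i_r+u_r$, $\dot\lambda_s=-R_s i_s+v$, $C\dot v=-Gv-\mathbf{E}i_{\mathsf t}-i_s$, $L_{\mathsf t}\tfrac{d}{dt}i_{\mathsf t}=-R_{\mathsf t}i_{\mathsf t}+\mathbf{E}^\top v$. Further definitions: $I_r^*=\mathrm{diag}(i^*_{r_i})$; $\Omega=\{x: i_r=i_r^*,\ \omega=\omega_0\mathbb{1}\}$; $Z_s=R_s+\boldsymbol{j}\omega_0L_s$, $Y_{\mathsf c}=G+\boldsymbol{j}\omega_0C$, $Z_{\mathsf t}=R_{\mathsf t}+\boldsymbol{j}\omega_0L_{\mathsf t}$, $\mathcal{L}_{\mathsf t}=\mathbf{E}Z_{\mathsf t}^{-1}\mathbf{E}^\top$; $\mathbf{\Pi}=\begin{bsmallmatrix}-\mathbf{Y}_{\mathsf{net}}\\ (Y_{\mathsf c}+\mathcal{L}_{\mathsf t})^{-1}\mathbf{Y}_{\mathsf{net}}\\ Z_{\mathsf t}^{-1}\mathbf{E}^\top(Y_{\mathsf c}+\mathcal{L}_{\mathsf t})^{-1}\mathbf{Y}_{\mathsf{net}}\end{bsmallmatrix}$; network flow map $\hat\pi:\mathbb{T}^n\to\mathbb{R}^{4n+2m}$, $\hat\pi(\theta)=\mathbf{\Pi}\mathbf{R}_\theta(L_m\otimes\mathsf{e}_2)i_r^*\omega_0$.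 The diagonal fiber through $\theta_{\mathsf{dq}}$ is $\mathbb{F}|_{\theta_{\mathsf{dq}}}=\{\theta=\omega_0\mathbb{1}s+\theta_{\mathsf{dq}}: s\in[0,2\pi/\omega_0)\}\subset\mathbb{T}^n$, and $\Gamma|_{\theta_{\mathsf{dq}}}=\{x\in\Omega:(i_s,v,i_{\mathsf t})\in\hat\pi(\mathbb{F}|_{\theta_{\mathsf{dq}}})\}$. *)

theory Defs
  imports "HOL-Analysis.Analysis"
begin

definition diagm :: "real^'n \<Rightarrow> real^'n^'n" where
  "diagm d = (\<chi> i j. if i = j then d$i else 0)"

text \<open>Kronecker product, index (i,k) with i outer, k inner (as for E \<otimes> I_2).\<close>
definition kron :: "real^'b^'a \<Rightarrow> real^'d^'c \<Rightarrow> real^('b\<times>'d)^('a\<times>'c)" where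
  "kron A B = (\<chi> p q. A$(fst p)$(fst q) * B$(snd p)$(snd q))"

text \<open>A \<otimes> v (v a column vector) and A \<otimes> v^T (v^T a row vector).\<close>
definition kron_col :: "real^'b^'a \<Rightarrow> real^'c \<Rightarrow> real^'b^('a\<times>'c)" where
  "kron_col A v = (\<chi> p j. A$(fst p)$j * v$(snd p))"

definition kron_row :: "real^'b^'a \<Rightarrow> real^'c \<Rightarrow> real^('b\<times>'c)^'a" where
  "kron_row A v = (\<chi> i q. A$i$(fst q) * v$(snd q))"

definition I2 :: "real^2^2" where "I2 = mat 1"
definition jmat :: "real^2^2" where "jmat = vector [vector [0, -1], vector [1, 0]]"
definition e1 :: "real^2" where "e1 = vector [1, 0]"
definition e2 :: "real^2" where "e2 = vector [0, 1]"

definition rot :: "real \<Rightarrow> real^2^2" where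
  "rot t = vector [vector [cos t, - sin t], vector [sin t, cos t]]"

definition blkrot :: "real^'n \<Rightarrow> real^('n\<times>2)^('n\<times>2)" where
  "blkrot \<theta> = (\<chi> p q. if fst p = fst q then rot (\<theta>$(fst p)) $ (snd p) $ (snd q) else 0)"

definition bj :: "real^('n::finite\<times>2)^('n\<times>2)" where
  "bj = kron (mat 1) jmat"

definition torus_eq :: "real^'n \<Rightarrow> real^'n \<Rightarrow> bool" where
  "torus_eq a b \<longleftrightarrow> (\<forall>i. \<exists>k::int. a$i - b$i = 2 * pi * of_int k)"

text \<open>Diagonal entries of M, D, R_r, L_r, L_m, R_s, L_s, C, G (per machine),
  of L_t, R_t (per line), and the signed incidence matrix E.\<close>
record ('n, 'm) mparams =
  pM :: "real^'n::finite"
  pD :: "real^'n"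
  pRr :: "real^'n"
  pLr :: "real^'n"
  pLm :: "real^'n"
  pRs :: "real^'n"
  pLs :: "real^'n"
  pC :: "real^'n"
  pG :: "real^'n"
  pLt :: "real^'m::finite"
  pRt :: "real^'m"
  pE :: "real^'m^'n"

definition signed_incidence :: "real^'m^'n \<Rightarrow> bool" where
  "signed_incidence E \<longleftrightarrow> (\<forall>e. \<exists>a b. a \<noteq> b \<and> E$a$e = 1 \<and> E$b$e = -1 \<and>
      (\<forall>k. k \<noteq> a \<and> k \<noteq> b \<longrightarrow> E$k$e = 0))"

definition inc_connected :: "real^'m^'n \<Rightarrow> bool" where
  "inc_connected E \<longleftrightarrow> (\<forall>a b. (\<lambda>x y. x \<noteq> y \<and> (\<exists>e. E$x$e \<noteq> 0 \<and> E$y$e \<noteq> 0))\<^sup>*\<^sup>* a b)"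

definition valid_params :: "('n::finite, 'm::finite) mparams \<Rightarrow> bool" where
  "valid_params P \<longleftrightarrow>
     (\<forall>i. pM P $ i > 0 \<and> pD P $ i > 0 \<and> pRr P $ i > 0 \<and> pLr P $ i > 0 \<and> pLm P $ i > 0 \<and>
          pRs P $ i > 0 \<and> pLs P $ i > 0 \<and> pC P $ i > 0 \<and> pG P $ i > 0 \<and>
          pLs P $ i * pLr P $ i - (pLm P $ i)^2 > 0) \<and>
     (\<forall>e. pLt P $ e > 0 \<and> pRt P $ e > 0) \<and>
     signed_incidence (pE P) \<and> inc_connected (pE P)"

definition RsM :: "('n::finite, 'm::finite) mparams \<Rightarrow> real^('n\<times>2)^('n\<times>2)" where
  "RsM P = kron (diagm (pRs P)) I2"
definition LsM :: "('n::finite, 'm::finite) mparams \<Rightarrow> real^('n\<times>2)^('n\<times>2)" where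
  "LsM P = kron (diagm (pLs P)) I2"
definition CM :: "('n::finite, 'm::finite) mparams \<Rightarrow> real^('n\<times>2)^('n\<times>2)" where
  "CM P = kron (diagm (pC P)) I2"
definition GM :: "('n::finite, 'm::finite) mparams \<Rightarrow> real^('n\<times>2)^('n\<times>2)" where
  "GM P = kron (diagm (pG P)) I2"
definition LtM :: "('n::finite, 'm::finite) mparams \<Rightarrow> real^('m\<times>2)^('m\<times>2)" where
  "LtM P = kron (diagm (pLt P)) I2"
definition RtM :: "('n::finite, 'm::finite) mparams \<Rightarrow> real^('m\<times>2)^('m\<times>2)" where
  "RtM P = kron (diagm (pRt P)) I2"
definition EM :: "('n::finite, 'm::finite) mparams \<Rightarrow> real^('m\<times>2)^('n\<times>2)" where
  "EM P = kron (pE P) I2"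

definition Zs :: "('n::finite, 'm::finite) mparams \<Rightarrow> real \<Rightarrow> real^('n\<times>2)^('n\<times>2)" where
  "Zs P \<omega>0 = RsM P + \<omega>0 *\<^sub>R (bj ** LsM P)"
definition Yc :: "('n::finite, 'm::finite) mparams \<Rightarrow> real \<Rightarrow> real^('n\<times>2)^('n\<times>2)" where
  "Yc P \<omega>0 = GM P + \<omega>0 *\<^sub>R (bj ** CM P)"
definition Zt :: "('n::finite, 'm::finite) mparams \<Rightarrow> real \<Rightarrow> real^('m\<times>2)^('m\<times>2)" where
  "Zt P \<omega>0 = RtM P + \<omega>0 *\<^sub>R (bj ** LtM P)"
definition Lnet :: "('n::finite, 'm::finite) mparams \<Rightarrow> real \<Rightarrow> real^('n\<times>2)^('n\<times>2)" where
  "Lnet P \<omega>0 = EM P ** matrix_inv (Zt P \<omega>0) ** transpose (EM P)"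
definition Ynet :: "('n::finite, 'm::finite) mparams \<Rightarrow> real \<Rightarrow> real^('n\<times>2)^('n\<times>2)" where
  "Ynet P \<omega>0 = matrix_inv (Zs P \<omega>0 + matrix_inv (Yc P \<omega>0 + Lnet P \<omega>0))"

text \<open>Network flow map: returns (i_s, v, i_t).\<close>
definition pihat :: "('n::finite, 'm::finite) mparams \<Rightarrow> real \<Rightarrow> real^'n \<Rightarrow> real^'n
     \<Rightarrow> (real^('n\<times>2)) \<times> (real^('n\<times>2)) \<times> (real^('m\<times>2))" where
  "pihat P \<omega>0 irs \<theta> =
    (let w = \<omega>0 *\<^sub>R (blkrot \<theta> *v (kron_col (diagm (pLm P)) e2 *v irs));
         Y = Ynet P \<omega>0;
         W = matrix_inv (Yc P \<omega>0 + Lnet P \<omega>0)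
     in (- (Y *v w), W *v (Y *v w),
         matrix_inv (Zt P \<omega>0) *v (transpose (EM P) *v (W *v (Y *v w)))))"

definition Knet :: "('n::finite, 'm::finite) mparams \<Rightarrow> real \<Rightarrow> real^'n \<Rightarrow> real^'n \<Rightarrow> real^'n^'n" where
  "Knet P \<omega>0 irs \<theta>dq =
     diagm irs ** kron_row (diagm (pLm P)) e2 ** transpose (blkrot \<theta>dq) ** Ynet P \<omega>0
       ** blkrot \<theta>dq ** kron_col (diagm (pLm P)) e2 ** diagm irs"

definition flux_ok :: "('n::finite, 'm::finite) mparams \<Rightarrow> real^'n \<Rightarrow> real^'n \<Rightarrow> real^('n\<times>2)
     \<Rightarrow> real^'n \<Rightarrow> real^('n\<times>2) \<Rightarrow> bool" where
  "flux_ok P \<theta> ir is lr ls \<longleftrightarrow>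
     ls = LsM P *v is + blkrot \<theta> *v (kron_col (diagm (pLm P)) e1 *v ir) \<and>
     lr = diagm (pLr P) *v ir + kron_row (diagm (pLm P)) e1 *v (transpose (blkrot \<theta>) *v is)"

definition tau_e :: "('n::finite, 'm::finite) mparams \<Rightarrow> real^'n \<Rightarrow> real^'n \<Rightarrow> real^('n\<times>2) \<Rightarrow> real^'n" where
  "tau_e P \<theta> ir is = - (diagm ir *v (kron_row (diagm (pLm P)) e2 *v (transpose (blkrot \<theta>) *v is)))"

text \<open>State: (om, th, lr, ls, v, it) (om, v, it stand for the states M om, C v, L_t i_t,
  M, C, L_t being invertible); ir, is are the currents determined by the flux relations.\<close>
definition is_solution :: "('n::finite, 'm::finite) mparams \<Rightarrow> (real^'n) \<times> (real^'n) \<Rightarrow> real set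
    \<Rightarrow> (real \<Rightarrow> real^'n) \<Rightarrow> (real \<Rightarrow> real^'n) \<Rightarrow> (real \<Rightarrow> real^'n) \<Rightarrow> (real \<Rightarrow> real^('n\<times>2))
    \<Rightarrow> (real \<Rightarrow> real^('n\<times>2)) \<Rightarrow> (real \<Rightarrow> real^('m\<times>2)) \<Rightarrow> (real \<Rightarrow> real^'n) \<Rightarrow> (real \<Rightarrow> real^('n\<times>2)) \<Rightarrow> bool" where
  "is_solution P u S om th lr ls v it ir is \<longleftrightarrow>
    (\<forall>t\<in>S.
       flux_ok P (th t) (ir t) (is t) (lr t) (ls t) \<and>
       ((\<lambda>s. diagm (pM P) *v om s) has_vector_derivative
          (- (diagm (pD P) *v om t) - tau_e P (th t) (ir t) (is t) + fst u)) (at t within S) \<and>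
       (th has_vector_derivative om t) (at t within S) \<and>
       (lr has_vector_derivative (- (diagm (pRr P) *v ir t) + snd u)) (at t within S) \<and>
       (ls has_vector_derivative (- (RsM P *v is t) + v t)) (at t within S) \<and>
       ((\<lambda>s. CM P *v v s) has_vector_derivative
          (- (GM P *v v t) - EM P *v it t - is t)) (at t within S) \<and>
       ((\<lambda>s. LtM P *v it s) has_vector_derivative
          (- (RtM P *v it t) + transpose (EM P) *v v t)) (at t within S))"

definition in_Gamma :: "('n::finite, 'm::finite) mparams \<Rightarrow> real \<Rightarrow> real^'n \<Rightarrow> real^'n
    \<Rightarrow> real^'n \<Rightarrow> real^'n \<Rightarrow> real^('n\<times>2) \<Rightarrow> real^('m\<times>2) \<Rightarrow> real^'n \<Rightarrow> real^('n\<times>2) \<Rightarrow> bool" where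
  "in_Gamma P \<omega>0 irs \<theta>dq om th v it ir is \<longleftrightarrow>
     ir = irs \<and> om = \<omega>0 *\<^sub>R 1 \<and>
     (\<exists>s\<in>{0..<2 * pi / \<omega>0}.
        torus_eq th ((s * \<omega>0) *\<^sub>R 1 + \<theta>dq) \<and>
        (is, v, it) = pihat P \<omega>0 irs ((s * \<omega>0) *\<^sub>R 1 + \<theta>dq))"

definition renders_invariant :: "('n::finite, 'm::finite) mparams \<Rightarrow> real \<Rightarrow> real^'n \<Rightarrow> real^'n
    \<Rightarrow> (real^'n) \<times> (real^'n) \<Rightarrow> bool" where
  "renders_invariant P \<omega>0 irs \<theta>dq u \<longleftrightarrow>
    (\<forall>om0 th0 lr0 ls0 v0 it0 ir0 is0.
       flux_ok P th0 ir0 is0 lr0 ls0 \<and> in_Gamma P \<omega>0 irs \<theta>dq om0 th0 v0 it0 ir0 is0 \<longrightarrow>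
       (\<exists>om th lr ls v it ir is.
          is_solution P u {0..} om th lr ls v it ir is \<and>
          om 0 = om0 \<and> th 0 = th0 \<and> lr 0 = lr0 \<and> ls 0 = ls0 \<and> v 0 = v0 \<and> it 0 = it0 \<and>
          (\<forall>t\<ge>0. in_Gamma P \<omega>0 irs \<theta>dq (om t) (th t) (v t) (it t) (ir t) (is t)))) \<and>
    (\<forall>T om th lr ls v it ir is.
       is_solution P u {0..T} om th lr ls v it ir is \<and> 0 \<le> T \<and>
       in_Gamma P \<omega>0 irs \<theta>dq (om 0) (th 0) (v 0) (it 0) (ir 0) (is 0) \<longrightarrow>
       (\<forall>t\<in>{0..T}. in_Gamma P \<omega>0 irs \<theta>dq (om t) (th t) (v t) (it t) (ir t) (is t)))"

end

theory Submission
  imports Defs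
begin

declare transpose_matrix_vector [simp del] vector_transpose_matrix [simp del]


lemma rot_mult: "rot a ** rot b = rot (a + b)"
  by (simp add: rot_def matrix_matrix_mult_def vec_eq_iff forall_2 sum_2 cos_add sin_add algebra_simps)
lemma j_rot: "jmat ** rot a = rot a ** jmat"
  by (simp add: rot_def jmat_def matrix_matrix_mult_def vec_eq_iff forall_2 sum_2)
lemma j_j: "jmat ** jmat = - mat 1"
  by (simp add: jmat_def mat_def matrix_matrix_mult_def vec_eq_iff forall_2 sum_2)
lemma transpose_j: "transpose jmat = - jmat"
  by (simp add: jmat_def transpose_def vec_eq_iff forall_2)
lemma rotT_rot: "transpose (rot a) ** rot a = mat 1"
  by (simp add: rot_def transpose_def mat_def matrix_matrix_mult_def vec_eq_iff forall_2 sum_2 power2_eq_square[symmetric])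
lemma rot_rotT: "rot a ** transpose (rot a) = mat 1"
  by (simp add: rot_def transpose_def mat_def matrix_matrix_mult_def vec_eq_iff forall_2 sum_2 power2_eq_square[symmetric])
lemma rot_shift: "rot (a + c) = cos c *\<^sub>R rot a + sin c *\<^sub>R (jmat ** rot a)"
  by (simp add: rot_def jmat_def matrix_matrix_mult_def vec_eq_iff forall_2 sum_2 cos_add sin_add algebra_simps)
lemma j_e1: "jmat *v e1 = e2"
  by (simp add: jmat_def e1_def e2_def matrix_vector_mult_def vec_eq_iff forall_2 sum_2)
lemma rot_periodic: "rot (a + 2 * pi * of_int k) = rot a"
  by (simp add: rot_def cos_add sin_add cos_int_2pin sin_int_2pin)

definition bd :: "('n::finite \<Rightarrow> real^2^2) \<Rightarrow> real^('n\<times>2)^('n\<times>2)" where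
  "bd f = (\<chi> p q. if fst p = fst q then f (fst p) $ snd p $ snd q else 0)"

lemma sum_pair_UNIV: "(\<Sum>r\<in>(UNIV::('a::finite\<times>'b::finite) set). g r) = (\<Sum>i\<in>UNIV. \<Sum>k\<in>UNIV. g (i,k))"
  by (subst UNIV_Times_UNIV[symmetric], subst sum.cartesian_product, simp add: split_def)

lemma bd_left: "(bd f ** B) $ p $ q = (\<Sum>k\<in>UNIV. f (fst p) $ snd p $ k * B $ (fst p, k) $ q)"
proof -
  have "(bd f ** B) $ p $ q = (\<Sum>i\<in>UNIV. \<Sum>k\<in>UNIV. (if fst p = i then f (fst p) $ snd p $ k else 0) * B $ (i, k) $ q)"
  proof -
    have "(bd f ** B) $ p $ q = (\<Sum>r\<in>UNIV. (if fst p = fst r then f (fst p) $ snd p $ snd r else 0) * B $ r $ q)"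
      by (simp add: bd_def matrix_matrix_mult_def)
    then show ?thesis by (simp only: sum_pair_UNIV fst_conv snd_conv)
  qed
  also have "\<dots> = (\<Sum>i\<in>UNIV. if fst p = i then (\<Sum>k\<in>UNIV. f (fst p) $ snd p $ k * B $ (i, k) $ q) else 0)"
    by (rule sum.cong) auto
  also have "\<dots> = (\<Sum>k\<in>UNIV. f (fst p) $ snd p $ k * B $ (fst p, k) $ q)"
    by (simp add: sum.delta)
  finally show ?thesis .
qed

lemma bd_right: "(B ** bd f) $ p $ q = (\<Sum>k\<in>UNIV. B $ p $ (fst q, k) * f (fst q) $ k $ snd q)"
proof -
  have "(B ** bd f) $ p $ q = (\<Sum>i\<in>UNIV. \<Sum>k\<in>UNIV. B $ p $ (i, k) * (if i = fst q then f i $ k $ snd q else 0))"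
  proof -
    have "(B ** bd f) $ p $ q = (\<Sum>r\<in>UNIV. B $ p $ r * (if fst r = fst q then f (fst r) $ snd r $ snd q else 0))"
      by (simp add: bd_def matrix_matrix_mult_def)
    then show ?thesis by (simp only: sum_pair_UNIV fst_conv snd_conv)
  qed
  also have "\<dots> = (\<Sum>i\<in>UNIV. if fst q = i then (\<Sum>k\<in>UNIV. B $ p $ (i, k) * f i $ k $ snd q) else 0)"
    by (rule sum.cong) auto
  also have "\<dots> = (\<Sum>k\<in>UNIV. B $ p $ (fst q, k) * f (fst q) $ k $ snd q)"
    by (simp add: sum.delta)
  finally show ?thesis .
qed

lemma bd_mult: "bd f ** bd g = bd (\<lambda>i. f i ** g i)"
  by (simp add: vec_eq_iff bd_left) (simp add: bd_def matrix_matrix_mult_def)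

lemma bd_transpose: "transpose (bd f) = bd (\<lambda>i. transpose (f i))"
  by (auto simp add: bd_def transpose_def vec_eq_iff)

lemma bd_add: "bd f + bd g = bd (\<lambda>i. f i + g i)"
  by (auto simp add: bd_def vec_eq_iff)
lemma bd_scaleR: "c *\<^sub>R bd f = bd (\<lambda>i. c *\<^sub>R f i)"
  by (auto simp add: bd_def vec_eq_iff)
lemma bd_uminus: "- bd f = bd (\<lambda>i. - f i)"
  by (auto simp add: bd_def vec_eq_iff)
lemma bd_mat: "mat 1 = bd (\<lambda>i. mat 1)"
  by (auto simp add: bd_def mat_def vec_eq_iff prod_eq_iff)
lemma blkrot_bd: "blkrot \<theta> = bd (\<lambda>i. rot (\<theta>$i))"
  by (simp add: blkrot_def bd_def)
lemma kron_diag_bd: "kron (diagm d) I2 = bd (\<lambda>i. d$i *\<^sub>R mat 1)"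
  by (auto simp add: kron_def diagm_def I2_def bd_def mat_def vec_eq_iff)
lemma bj_bd: "bj = bd (\<lambda>i. jmat)"
  by (auto simp add: bj_def kron_def bd_def mat_def vec_eq_iff)

lemma kron_mult: "kron A B ** kron C D = kron (A ** C) (B ** D)"
  by (simp add: kron_def matrix_matrix_mult_def vec_eq_iff sum_pair_UNIV sum_product ac_simps)
lemma kron_transpose: "transpose (kron A B) = kron (transpose A) (transpose B)"
  by (simp add: kron_def transpose_def vec_eq_iff)

lemma kron_col_mult: fixes B :: "real^2^2" shows "kron (mat 1) B ** kron_col A v = kron_col A (B *v v)"
proof -
  have "kron (mat 1) B = bd (\<lambda>i. B)"
    by (auto simp add: kron_def bd_def mat_def vec_eq_iff)
  show ?thesis unfolding \<open>kron (mat 1) B = bd (\<lambda>i. B)\<close>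
    by (simp add: vec_eq_iff bd_left kron_col_def matrix_vector_mult_def sum_distrib_left sum_distrib_right ac_simps)
qed

lemma bd_mv: "(bd f *v x) $ p = (\<Sum>k\<in>UNIV. f (fst p) $ snd p $ k * x $ (fst p, k))"
proof -
  have "(bd f *v x) $ p = (\<Sum>r\<in>UNIV. (if fst p = fst r then f (fst p) $ snd p $ snd r else 0) * x $ r)"
    by (simp add: bd_def matrix_vector_mult_def)
  also have "\<dots> = (\<Sum>i\<in>UNIV. \<Sum>k\<in>UNIV. (if fst p = i then f (fst p) $ snd p $ k else 0) * x $ (i, k))"
    by (simp only: sum_pair_UNIV fst_conv snd_conv)
  also have "\<dots> = (\<Sum>i\<in>UNIV. if fst p = i then (\<Sum>k\<in>UNIV. f (fst p) $ snd p $ k * x $ (i, k)) else 0)"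
    by (rule sum.cong) auto
  also have "\<dots> = (\<Sum>k\<in>UNIV. f (fst p) $ snd p $ k * x $ (fst p, k))"
    by (simp add: sum.delta)
  finally show ?thesis .
qed

lemma kron_diag_mv: "kron (diagm d) I2 *v x = (\<chi> p. d$(fst p) * x$p)"
proof -
  have "(kron (diagm d) I2 *v x) $ p = d$(fst p) * x$p" for p
  proof -
    have "(kron (diagm d) I2 *v x) $ p = (\<Sum>k\<in>UNIV. (d$(fst p) * (if snd p = k then 1 else 0)) * x $ (fst p, k))"
      unfolding kron_diag_bd bd_mv by (simp add: mat_def)
    also have "\<dots> = (\<Sum>k\<in>UNIV. if snd p = k then d$(fst p) * x $ (fst p, k) else 0)"
      by (rule sum.cong) auto
    also have "\<dots> = d$(fst p) * x$p" by (simp add: sum.delta)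
    finally show ?thesis .
  qed
  then show ?thesis by (simp add: vec_eq_iff)
qed

lemma quad_kron_diag: "inner x (kron (diagm d) I2 *v x) = (\<Sum>p\<in>UNIV. d$(fst p) * (x$p)^2)"
  by (simp add: kron_diag_mv inner_vec_def power2_eq_square ac_simps)

lemma quad_kron_diag_nonneg: "(\<forall>i. d$i \<ge> 0) \<Longrightarrow> inner x (kron (diagm d) I2 *v x) \<ge> 0"
  unfolding quad_kron_diag by (intro sum_nonneg) auto

lemma quad_kron_diag_pos: assumes "\<forall>i. d$i > 0" "x \<noteq> 0" shows "inner x (kron (diagm d) I2 *v x) > 0"
proof -
  obtain p where p: "x$p \<noteq> 0" using assms(2) by (auto simp: vec_eq_iff)
  show ?thesis unfolding quad_kron_diag
    by (rule sum_pos2[where i=p]) (use assms p in \<open>auto simp: less_imp_le\<close>)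
qed

lemma skew_quad: fixes S :: "real^'k^'k" assumes "transpose S = - S" shows "inner x (S *v x) = 0"
proof -
  have "inner x (S *v x) = inner (x v* S) x" by (rule dot_lmul_matrix[symmetric])
  also have "x v* S = - (S *v x)" by (metis transpose_matrix_vector assms matrix_vector_mult_0 
      add.inverse_inverse matrix_vector_mult_diff_rdistrib diff_0)
  finally show ?thesis by (simp add: inner_commute)
qed

lemma transpose_kron_diag: "transpose (kron (diagm d) I2) = kron (diagm d) I2"
  by (auto simp add: kron_diag_bd bd_transpose transpose_scalar)

lemma j_scal: "jmat ** (a *\<^sub>R mat 1) = a *\<^sub>R jmat"
  by (metis matrix_mul_rid matrix_scalar_ac)

lemma bj_kron_diag_skew: "transpose (c *\<^sub>R (bj ** kron (diagm d) I2)) = - (c *\<^sub>R (bj ** kron (diagm d) I2))"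
  by (simp add: kron_diag_bd bj_bd bd_mult bd_transpose transpose_scalar bd_scaleR bd_uminus transpose_j j_scal)

lemma pd_invertible: fixes A :: "real^'k^'k" assumes "\<And>x. x \<noteq> 0 \<Longrightarrow> inner x (A *v x) > 0"
  shows "invertible A"
proof -
  have "\<forall>x. A *v x = 0 \<longrightarrow> x = 0" using assms by force
  then show ?thesis by (simp add: invertible_left_inverse matrix_left_invertible_ker)
qed

lemma matrix_inv_both: fixes A :: "real^'k^'k" assumes "invertible A"
  shows "A ** matrix_inv A = mat 1" "matrix_inv A ** A = mat 1"
proof -
  have "\<exists>A'. A ** A' = mat 1 \<and> A' ** A = mat 1" using assms by (simp add: invertible_def)
  then have "A ** matrix_inv A = mat 1 \<and> matrix_inv A ** A = mat 1"
    unfolding matrix_inv_def by (rule someI_ex)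
  then show "A ** matrix_inv A = mat 1" "matrix_inv A ** A = mat 1" by auto
qed

lemma inv_quad_nonneg: fixes A :: "real^'k^'k" assumes "invertible A" "\<And>z. inner z (A *v z) \<ge> 0"
  shows "inner y (matrix_inv A *v y) \<ge> 0"
proof -
  let ?z = "matrix_inv A *v y"
  have "y = A *v ?z" by (simp add: matrix_vector_mul_assoc matrix_inv_both[OF assms(1)])
  then have "inner y ?z = inner ?z (A *v ?z)" by (metis inner_commute)
  then show ?thesis using assms(2) by simp
qed

lemma inner_mv_transpose: "inner x (A *v y) = inner (transpose A *v x) (y::real^'k)"
  by (simp add: dot_lmul_matrix transpose_matrix_vector)

lemma commute_inv: fixes A :: "real^'k^'k" assumes "invertible A" "A ** B = B ** A"
  shows "matrix_inv A ** B = B ** matrix_inv A"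
proof -
  have "matrix_inv A ** B = matrix_inv A ** B ** (A ** matrix_inv A)"
    by (simp add: matrix_inv_both[OF assms(1)])
  also have "\<dots> = matrix_inv A ** (A ** B) ** matrix_inv A"
    by (simp add: matrix_mul_assoc assms(2))
  also have "\<dots> = B ** matrix_inv A"
    by (simp add: matrix_mul_assoc matrix_inv_both[OF assms(1)])
  finally show ?thesis .
qed

lemma mm_radd: "(A + B) ** C = A ** C + B ** (C::real^'c^'b)"
  by (vector matrix_matrix_mult_def sum.distrib distrib_right)
lemma mm_lneg: "(- A) ** B = - (A ** (B::real^'c^'b))"
  by (vector matrix_matrix_mult_def sum_negf)
lemma mm_rneg: "A ** (- B) = - (A ** (B::real^'c^'b))"
  by (vector matrix_matrix_mult_def sum_negf)

lemma comm_add: "A ** X = X ** A \<Longrightarrow> B ** X = X ** B \<Longrightarrow> (A + B) ** X = X ** (A + (B::real^'k^'k))"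
  by (simp add: mm_radd matrix_add_ldistrib)
lemma comm_scale: "A ** X = X ** A \<Longrightarrow> (c *\<^sub>R A) ** X = X ** (c *\<^sub>R (A::real^'k^'k))"
  by (metis matrix_scalar_ac scalar_matrix_assoc)
lemma comm_mult: "A ** X = X ** A \<Longrightarrow> B ** X = X ** B \<Longrightarrow> (A ** B) ** X = X ** (A ** (B::real^'k^'k))"
  by (metis matrix_mul_assoc)

lemma kron_diag_comm: "kron (diagm d) I2 ** bj = bj ** kron (diagm d) I2"
  by (simp add: kron_diag_bd bj_bd bd_mult j_scal matrix_scalar_ac[symmetric] scalar_matrix_assoc[symmetric])

lemma bj_bj: "bj ** bj = - mat 1"
proof -
  have "bj ** bj = bd (\<lambda>i. - mat 1)" by (simp add: bj_bd bd_mult j_j)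
  also have "\<dots> = - bd (\<lambda>i. mat 1)" by (rule bd_uminus[symmetric])
  finally show ?thesis by (simp add: bd_mat[symmetric])
qed

lemma bj_transpose: "transpose bj = - bj"
  by (simp add: bj_bd bd_transpose transpose_j bd_uminus)

lemma blkrot_comm: "blkrot \<theta> ** bj = bj ** blkrot \<theta>"
  by (simp add: blkrot_bd bj_bd bd_mult j_rot)

lemma EM_comm: "EM P ** bj = bj ** EM P"
  by (simp add: EM_def bj_def kron_mult I2_def)

lemma EMT_comm: "transpose (EM P) ** bj = bj ** transpose (EM P)"
  by (simp add: EM_def bj_def kron_mult I2_def kron_transpose)

lemma valid_pos:
  assumes "valid_params P"
  shows "\<forall>i. pM P $ i > 0" "\<forall>i. pD P $ i > 0" "\<forall>i. pRr P $ i > 0" "\<forall>i. pLr P $ i > 0"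
    "\<forall>i. pLm P $ i > 0" "\<forall>i. pRs P $ i > 0" "\<forall>i. pLs P $ i > 0" "\<forall>i. pC P $ i > 0"
    "\<forall>i. pG P $ i > 0" "\<forall>i. pLs P $ i * pLr P $ i - (pLm P $ i)^2 > 0"
    "\<forall>e. pLt P $ e > 0" "\<forall>e. pRt P $ e > 0"
  using assms by (auto simp: valid_params_def)

lemma Zs_comm: "Zs P w ** bj = bj ** Zs P w"
  unfolding Zs_def RsM_def LsM_def
  by (intro comm_add comm_scale comm_mult kron_diag_comm refl)
lemma Yc_comm: "Yc P w ** bj = bj ** Yc P w"
  unfolding Yc_def GM_def CM_def
  by (intro comm_add comm_scale comm_mult kron_diag_comm refl)
lemma Zt_comm: "Zt P w ** bj = bj ** Zt P w"
  unfolding Zt_def RtM_def LtM_def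
  by (intro comm_add comm_scale comm_mult kron_diag_comm refl)

lemma quad_split: "inner x ((A + c *\<^sub>R (bj ** kron (diagm d) I2)) *v x) = inner x (A *v x)"
  using skew_quad[OF bj_kron_diag_skew[of c d], of x]
  by (simp add: matrix_vector_mult_add_rdistrib inner_add_right)

lemma Zt_quad: "inner x (Zt P w *v x) = inner x (RtM P *v x)"
  unfolding Zt_def LtM_def by (rule quad_split)
lemma Zs_quad: "inner x (Zs P w *v x) = inner x (RsM P *v x)"
  unfolding Zs_def LsM_def by (rule quad_split)
lemma Yc_quad: "inner x (Yc P w *v x) = inner x (GM P *v x)"
  unfolding Yc_def CM_def by (rule quad_split)

lemma Zt_inv: assumes "valid_params P" shows "invertible (Zt P w)"
  by (rule pd_invertible) (simp add: Zt_quad RtM_def quad_kron_diag_pos valid_pos[OF assms])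

lemma Lnet_quad: assumes "valid_params P" shows "inner x (Lnet P w *v x) \<ge> 0"
proof -
  have "inner x (Lnet P w *v x) = inner (transpose (EM P) *v x) (matrix_inv (Zt P w) *v (transpose (EM P) *v x))"
    unfolding Lnet_def by (simp only: matrix_vector_mul_assoc[symmetric] inner_mv_transpose)
  also have "\<dots> \<ge> 0"
    by (rule inv_quad_nonneg[OF Zt_inv[OF assms]])
       (simp add: Zt_quad RtM_def quad_kron_diag_nonneg valid_pos[OF assms] less_imp_le)
  finally show ?thesis .
qed

lemma YL_quad: assumes "valid_params P" "x \<noteq> 0" shows "inner x ((Yc P w + Lnet P w) *v x) > 0"
proof -
  have "inner x (Yc P w *v x) > 0"
    by (simp add: Yc_quad GM_def quad_kron_diag_pos valid_pos[OF assms(1)] assms(2))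
  then show ?thesis using Lnet_quad[OF assms(1), of x w]
    by (simp add: matrix_vector_mult_add_rdistrib inner_add_right)
qed

lemma YL_inv: assumes "valid_params P" shows "invertible (Yc P w + Lnet P w)"
  by (rule pd_invertible) (rule YL_quad[OF assms])

lemma ZW_inv: assumes "valid_params P"
  shows "invertible (Zs P w + matrix_inv (Yc P w + Lnet P w))"
proof (rule pd_invertible)
  fix x :: "real^('a\<times>2)" assume x: "x \<noteq> 0"
  have "inner x (Zs P w *v x) > 0"
    by (simp add: Zs_quad RsM_def quad_kron_diag_pos valid_pos[OF assms] x)
  moreover have "inner x (matrix_inv (Yc P w + Lnet P w) *v x) \<ge> 0"
    by (rule inv_quad_nonneg[OF YL_inv[OF assms]]) (metis YL_quad[OF assms] inner_zero_left less_imp_le order_refl)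
  ultimately show "inner x ((Zs P w + matrix_inv (Yc P w + Lnet P w)) *v x) > 0"
    by (simp add: matrix_vector_mult_add_rdistrib inner_add_right)
qed

lemma Lnet_comm: assumes "valid_params P" shows "Lnet P w ** bj = bj ** Lnet P w"
proof -
  have iz: "matrix_inv (Zt P w) ** bj = bj ** matrix_inv (Zt P w)"
    by (rule commute_inv[OF Zt_inv[OF assms] Zt_comm])
  show ?thesis unfolding Lnet_def
    by (simp add: matrix_mul_assoc[symmetric] EMT_comm) (simp add: matrix_mul_assoc iz EM_comm)
qed

lemma W_comm: assumes "valid_params P"
  shows "matrix_inv (Yc P w + Lnet P w) ** bj = bj ** matrix_inv (Yc P w + Lnet P w)"
  by (rule commute_inv[OF YL_inv[OF assms]]) (intro comm_add Yc_comm Lnet_comm assms)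

lemma Ynet_comm: assumes "valid_params P" shows "Ynet P w ** bj = bj ** Ynet P w"
  unfolding Ynet_def
  by (rule commute_inv[OF ZW_inv[OF assms]]) (intro comm_add Zs_comm W_comm assms)

lemma iZt_comm: assumes "valid_params P" shows "matrix_inv (Zt P w) ** bj = bj ** matrix_inv (Zt P w)"
  by (rule commute_inv[OF Zt_inv[OF assms] Zt_comm])

lemma rot_zero: "rot 0 = mat 1"
  by (simp add: rot_def mat_def vec_eq_iff forall_2)
lemma rot_transpose: "transpose (rot a) = rot (- a)"
  by (simp add: rot_def transpose_def vec_eq_iff forall_2)

lemma blkrot_add: "blkrot (a + b) = blkrot a ** blkrot b"
  by (simp add: blkrot_bd bd_mult rot_mult)
lemma blkrot_commute: "blkrot a ** blkrot b = blkrot b ** blkrot a"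
  by (metis blkrot_add add.commute)
lemma blkrot_orth: "transpose (blkrot a) ** blkrot a = mat 1" "blkrot a ** transpose (blkrot a) = mat 1"
  by (simp_all add: blkrot_bd bd_transpose bd_mult rotT_rot rot_rotT bd_mat[symmetric])
lemma blkrot_transpose: "transpose (blkrot a) = blkrot (- a)"
  by (simp add: blkrot_bd bd_transpose rot_transpose)

lemma blkrot_const: "blkrot (c *\<^sub>R 1) = cos c *\<^sub>R mat 1 + sin c *\<^sub>R bj"
proof -
  have "rot c = cos c *\<^sub>R mat 1 + sin c *\<^sub>R jmat"
    using rot_shift[of 0 c] by (simp add: rot_zero)
  then have "blkrot (c *\<^sub>R 1) = bd (\<lambda>i. cos c *\<^sub>R mat 1 + sin c *\<^sub>R jmat)"
    by (simp add: blkrot_bd)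
  also have "\<dots> = cos c *\<^sub>R bd (\<lambda>i. mat 1) + sin c *\<^sub>R bd (\<lambda>i. jmat)"
    by (simp add: bd_scaleR bd_add)
  finally show ?thesis by (simp add: bd_mat[symmetric] bj_bd[symmetric])
qed

lemma comm_blkrot_const: fixes Y :: "real^('n::finite\<times>2)^('n\<times>2)"
  assumes "Y ** bj = bj ** Y" shows "Y ** blkrot (c *\<^sub>R 1) = blkrot (c *\<^sub>R 1) ** Y"
proof -
  have "(cos c *\<^sub>R mat 1 + sin c *\<^sub>R bj) ** Y = Y ** (cos c *\<^sub>R mat 1 + sin c *\<^sub>R bj)"
    by (rule comm_add; rule comm_scale; simp add: assms)
  then show ?thesis by (simp add: blkrot_const)
qed

lemma blkrot_shift_mult: "blkrot (\<theta> + c *\<^sub>R 1) = blkrot (c *\<^sub>R 1) ** blkrot \<theta>"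
  by (simp add: blkrot_add blkrot_commute)

lemma RtYR: fixes Y :: "real^('n::finite\<times>2)^('n\<times>2)" assumes "Y ** bj = bj ** Y"
  shows "transpose (blkrot (\<theta> + c *\<^sub>R 1)) ** Y ** blkrot (\<theta> + c *\<^sub>R 1) = transpose (blkrot \<theta>) ** Y ** blkrot \<theta>"
proof -
  let ?C = "blkrot (c *\<^sub>R 1)" and ?B = "blkrot \<theta>"
  have "transpose (blkrot (\<theta> + c *\<^sub>R 1)) ** Y ** blkrot (\<theta> + c *\<^sub>R 1) = transpose ?B ** (transpose ?C ** (Y ** ?C)) ** ?B"
    by (simp add: blkrot_shift_mult matrix_transpose_mul matrix_mul_assoc)
  also have "transpose ?C ** (Y ** ?C) = Y"
    by (simp add: comm_blkrot_const[OF assms] matrix_mul_assoc blkrot_orth)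
  finally show ?thesis .
qed

lemma blkrot_periodic: assumes "torus_eq a b" shows "blkrot a = blkrot b"
proof -
  have "rot (a$i) = rot (b$i)" for i
  proof -
    obtain k :: int where "a$i - b$i = 2 * pi * of_int k" using assms by (auto simp: torus_eq_def)
    then have "a$i = b$i + 2 * pi * of_int k" by simp
    then show ?thesis by (simp add: rot_periodic)
  qed
  then show ?thesis by (simp add: blkrot_bd)
qed

lemma pihat_periodic: "torus_eq a b \<Longrightarrow> pihat P w irs a = pihat P w irs b"
  by (simp add: pihat_def blkrot_periodic)

definition osc :: "real \<Rightarrow> real^('k::finite\<times>2) \<Rightarrow> real^('k\<times>2)" where
  "osc c p = cos c *\<^sub>R p + sin c *\<^sub>R (bj *v p)"

lemma mv_scaleR_left: "(c *\<^sub>R A) *v x = c *\<^sub>R (A *v (x::real^'k))"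
  by (simp add: matrix_vector_mult_def vec_eq_iff sum_distrib_left ac_simps)

lemma blkrot_osc: "blkrot (\<theta> + c *\<^sub>R 1) *v x = osc c (blkrot \<theta> *v x)"
  by (simp add: blkrot_shift_mult blkrot_const osc_def matrix_vector_mul_assoc[symmetric]
      matrix_vector_mult_add_rdistrib mv_scaleR_left)

lemma mv_neg_left: "(- A) *v x = - (A *v (x::real^'k))"
  by (simp add: matrix_vector_mult_def vec_eq_iff sum_negf)

lemma bj_bj_v: "bj *v (bj *v p) = - p"
  by (simp add: matrix_vector_mul_assoc bj_bj mv_neg_left)
  

lemma osc_comm: fixes A :: "real^('a::finite\<times>2)^('b::finite\<times>2)"
  assumes "A ** bj = bj ** A" shows "A *v osc c p = osc c (A *v p)"
  by (simp add: osc_def matrix_vector_right_distrib matrix_vector_mult_scaleR matrix_vector_mul_assoc assms)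

lemma osc_add: "osc c p + osc c q = osc c (p + q)"
  by (simp add: osc_def matrix_vector_right_distrib algebra_simps)
lemma osc_neg: "- osc c p = osc c (- p)"
  by (simp add: osc_def algebra_simps matrix_vector_mult_diff_distrib[of _ 0, simplified])
lemma osc_diff: "osc c p - osc c q = osc c (p - q)"
  by (simp add: osc_def matrix_vector_mult_diff_distrib algebra_simps)
lemma osc_scaleR: "a *\<^sub>R osc c p = osc c (a *\<^sub>R p)"
  by (simp add: osc_def matrix_vector_mult_scaleR algebra_simps)
lemma osc_zero: "osc 0 p = p"
  by (simp add: osc_def)

lemma osc_deriv: "((\<lambda>t. osc (w*t) p) has_vector_derivative (w *\<^sub>R osc (w*t) (bj *v p))) (at t within S)"
proof -
  have c: "((\<lambda>t. cos (w*t)) has_real_derivative (- sin (w*t) * w)) (at t within S)"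
    by (auto intro!: derivative_eq_intros)
  have s: "((\<lambda>t. sin (w*t)) has_real_derivative (cos (w*t) * w)) (at t within S)"
    by (auto intro!: derivative_eq_intros)
  have "((\<lambda>t. cos (w*t) *\<^sub>R p + sin (w*t) *\<^sub>R (bj *v p)) has_vector_derivative
       ((- sin (w*t) * w) *\<^sub>R p + (cos (w*t) * w) *\<^sub>R (bj *v p))) (at t within S)"
    using has_vector_derivative_add[OF has_vector_derivative_scaleR[OF c has_vector_derivative_const]
        has_vector_derivative_scaleR[OF s has_vector_derivative_const]] by simp
  then show ?thesis
    by (simp add: osc_def bj_bj_v algebra_simps matrix_vector_mult_scaleR)
qed

definition a0 :: "('n::finite, 'm::finite) mparams \<Rightarrow> real^'n \<Rightarrow> real^('n\<times>2)" where
  "a0 P irs = kron_col (diagm (pLm P)) e2 *v irs"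
definition b0 :: "('n::finite, 'm::finite) mparams \<Rightarrow> real^'n \<Rightarrow> real^('n\<times>2)" where
  "b0 P irs = kron_col (diagm (pLm P)) e1 *v irs"
definition Wm :: "('n::finite, 'm::finite) mparams \<Rightarrow> real \<Rightarrow> real^('n\<times>2)^('n\<times>2)" where
  "Wm P w = matrix_inv (Yc P w + Lnet P w)"
definition w0 :: "('n::finite, 'm::finite) mparams \<Rightarrow> real \<Rightarrow> real^'n \<Rightarrow> real^'n \<Rightarrow> real^('n\<times>2)" where
  "w0 P w irs th = w *\<^sub>R (blkrot th *v a0 P irs)"
definition pI :: "('n::finite, 'm::finite) mparams \<Rightarrow> real \<Rightarrow> real^'n \<Rightarrow> real^'n \<Rightarrow> real^('n\<times>2)" where
  "pI P w irs th = - (Ynet P w *v w0 P w irs th)"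
definition pV :: "('n::finite, 'm::finite) mparams \<Rightarrow> real \<Rightarrow> real^'n \<Rightarrow> real^'n \<Rightarrow> real^('n\<times>2)" where
  "pV P w irs th = Wm P w *v (Ynet P w *v w0 P w irs th)"
definition pT :: "('n::finite, 'm::finite) mparams \<Rightarrow> real \<Rightarrow> real^'n \<Rightarrow> real^'n \<Rightarrow> real^('m\<times>2)" where
  "pT P w irs th = matrix_inv (Zt P w) *v (transpose (EM P) *v pV P w irs th)"

lemma pihat_eq: "pihat P w irs th = (pI P w irs th, pV P w irs th, pT P w irs th)"
  by (simp add: pihat_def pI_def pV_def pT_def w0_def Wm_def a0_def Let_def)

lemma pihat_osc: assumes "valid_params P"
  shows "pihat P w irs (th + c *\<^sub>R 1) = (osc c (pI P w irs th), osc c (pV P w irs th), osc c (pT P w irs th))"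
proof -
  have w: "w0 P w irs (th + c *\<^sub>R 1) = osc c (w0 P w irs th)"
    by (simp add: w0_def blkrot_osc osc_scaleR)
  have Y: "Ynet P w *v osc c x = osc c (Ynet P w *v x)" for x
    by (rule osc_comm[OF Ynet_comm[OF assms]])
  have W: "Wm P w *v osc c x = osc c (Wm P w *v x)" for x
    unfolding Wm_def by (rule osc_comm[OF W_comm[OF assms]])
  have Z: "matrix_inv (Zt P w) *v osc c x = osc c (matrix_inv (Zt P w) *v x)" for x
    by (rule osc_comm[OF iZt_comm[OF assms]])
  have E: "transpose (EM P) *v osc c x = osc c (transpose (EM P) *v x)" for x
    by (rule osc_comm[OF EMT_comm])
  show ?thesis
    by (simp add: pihat_eq pI_def pV_def pT_def w Y W Z E osc_neg)
qed

lemma RtIs: "transpose (blkrot th) *v pI P w irs th = - (w *\<^sub>R ((transpose (blkrot th) ** Ynet P w ** blkrot th) *v a0 P irs))"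
  by (simp add: pI_def w0_def matrix_vector_mul_assoc matrix_vector_mult_scaleR matrix_mul_assoc
      matrix_vector_mult_diff_distrib[of _ 0, simplified])

lemma RtIs_shift: assumes "valid_params P"
  shows "transpose (blkrot (th + c *\<^sub>R 1)) *v pI P w irs (th + c *\<^sub>R 1) = transpose (blkrot th) *v pI P w irs th"
  unfolding RtIs RtYR[OF Ynet_comm[OF assms]] ..

lemma tau_e_cong: "blkrot a = blkrot b \<Longrightarrow> tau_e P a = tau_e P b"
  by (simp add: tau_e_def fun_eq_iff)

lemma Knet_apply: "Knet P w irs th *v (w *\<^sub>R 1) = tau_e P th irs (pI P w irs th)"
proof -
  have d1: "diagm irs *v 1 = irs"
    by (simp add: diagm_def matrix_vector_mult_def vec_eq_iff if_distrib if_distribR sum.delta cong: if_cong)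
  show ?thesis
    unfolding tau_e_def RtIs Knet_def
    by (simp add: matrix_vector_mul_assoc[symmetric] d1 matrix_vector_mult_scaleR a0_def
      matrix_vector_mult_diff_distrib[of _ 0, simplified])
qed

lemma bj_b0: "bj *v b0 P irs = a0 P irs"
  by (simp add: b0_def a0_def matrix_vector_mul_assoc bj_def kron_col_mult j_e1)

lemma mv_add_left: "(A + B) *v x = A *v x + B *v (x::real^'k)"
  by (rule matrix_vector_mult_add_rdistrib)

lemma lin3a: "- p = g + x + e \<Longrightarrow> x = - g - e - (p::'a::ab_group_add)"
proof -
  assume h: "- p = g + x + e"
  have "x = (g + x + e) - g - e" by (simp add: algebra_simps)
  also have "\<dots> = - g - e - p" by (subst h[symmetric]) (simp add: algebra_simps)
  finally show ?thesis .
qed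
lemma lin3b: "q = r + x \<Longrightarrow> x = - r + (q::'a::ab_group_add)"
proof -
  assume h: "q = r + x"
  have "x = (r + x) - r" by (simp add: algebra_simps)
  also have "\<dots> = - r + q" by (subst h) (simp add: algebra_simps)
  finally show ?thesis .
qed

lemma K1: assumes "valid_params P"
  shows "w *\<^sub>R (bj *v (LsM P *v pI P w irs th + blkrot th *v b0 P irs)) = - (RsM P *v pI P w irs th) + pV P w irs th"
proof -
  let ?Y = "Ynet P w" and ?w0 = "w0 P w irs th"
  have inv: "(Zs P w + Wm P w) ** ?Y = mat 1"
    unfolding Ynet_def Wm_def by (rule matrix_inv_both(1)[OF ZW_inv[OF assms]])
  have "?w0 = (Zs P w + Wm P w) *v (?Y *v ?w0)"
    by (simp add: matrix_vector_mul_assoc inv)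
  also have "\<dots> = - (RsM P *v pI P w irs th) - w *\<^sub>R (bj *v (LsM P *v pI P w irs th)) + pV P w irs th"
    by (simp add: mv_add_left Zs_def pI_def pV_def mv_scaleR_left matrix_vector_mul_assoc[symmetric]
        matrix_vector_mult_diff_distrib[of _ 0, simplified] matrix_vector_mult_scaleR)
  finally have e: "?w0 = - (RsM P *v pI P w irs th) - w *\<^sub>R (bj *v (LsM P *v pI P w irs th)) + pV P w irs th" .
  have "w *\<^sub>R (bj *v (blkrot th *v b0 P irs)) = ?w0"
    by (simp add: w0_def matrix_vector_mul_assoc blkrot_comm[symmetric])
       (simp add: matrix_vector_mul_assoc[symmetric] bj_b0)
  then show ?thesis using e
    by (simp add: matrix_vector_right_distrib scaleR_right_distrib algebra_simps)
qed

lemma K2: assumes "valid_params P"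
  shows "w *\<^sub>R (bj *v (CM P *v pV P w irs th)) = - (GM P *v pV P w irs th) - EM P *v pT P w irs th - pI P w irs th"
proof -
  have inv: "(Yc P w + Lnet P w) ** Wm P w = mat 1"
    unfolding Wm_def by (rule matrix_inv_both(1)[OF YL_inv[OF assms]])
  have "- pI P w irs th = (Yc P w + Lnet P w) *v pV P w irs th"
    by (simp add: pI_def pV_def matrix_vector_mul_assoc matrix_mul_assoc inv)
  also have "\<dots> = GM P *v pV P w irs th + w *\<^sub>R (bj *v (CM P *v pV P w irs th)) + EM P *v pT P w irs th"
    by (simp add: mv_add_left Yc_def Lnet_def pT_def mv_scaleR_left matrix_vector_mul_assoc[symmetric])
  finally show ?thesis by (rule lin3a)
qed

lemma K3: assumes "valid_params P"
  shows "w *\<^sub>R (bj *v (LtM P *v pT P w irs th)) = - (RtM P *v pT P w irs th) + transpose (EM P) *v pV P w irs th"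
proof -
  have inv: "Zt P w ** matrix_inv (Zt P w) = mat 1"
    by (rule matrix_inv_both(1)[OF Zt_inv[OF assms]])
  have "transpose (EM P) *v pV P w irs th = Zt P w *v pT P w irs th"
    by (simp add: pT_def matrix_vector_mul_assoc matrix_mul_assoc inv)
  also have "\<dots> = RtM P *v pT P w irs th + w *\<^sub>R (bj *v (LtM P *v pT P w irs th))"
    by (simp add: mv_add_left Zt_def mv_scaleR_left matrix_vector_mul_assoc[symmetric])
  finally show ?thesis by (rule lin3b)
qed

lemma Knet_assoc: "Knet P w irs th = (diagm irs ** kron_row (diagm (pLm P)) e2) **
     (transpose (blkrot th) ** Ynet P w ** blkrot th) ** (kron_col (diagm (pLm P)) e2 ** diagm irs)"
  by (simp add: Knet_def matrix_mul_assoc)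

lemma Knet_shift: assumes "valid_params P" shows "Knet P w irs (th + c *\<^sub>R 1) = Knet P w irs th"
  unfolding Knet_assoc RtYR[OF Ynet_comm[OF assms]] ..

lemma Knet_cong: "blkrot a = blkrot b \<Longrightarrow> Knet P w irs a = Knet P w irs b"
  by (simp add: Knet_def)
lemma pI_cong: "blkrot a = blkrot b \<Longrightarrow> pI P w irs a = pI P w irs b"
  by (simp add: pI_def w0_def)

lemma torus_eq_sym: "torus_eq a b \<Longrightarrow> torus_eq b a"
  unfolding torus_eq_def by (metis minus_diff_eq mult_minus_right of_int_minus)
lemma torus_eq_add: "torus_eq a b \<Longrightarrow> torus_eq (a + x) (b + x)"
  unfolding torus_eq_def by simp
lemma torus_eq_trans: "torus_eq a b \<Longrightarrow> torus_eq b c \<Longrightarrow> torus_eq a c"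
  unfolding torus_eq_def
proof clarify
  fix i assume "\<forall>i. \<exists>k::int. a$i - b$i = 2 * pi * of_int k" "\<forall>i. \<exists>k::int. b$i - c$i = 2 * pi * of_int k"
  then obtain k1 k2 :: int where "a$i - b$i = 2 * pi * of_int k1" "b$i - c$i = 2 * pi * of_int k2" by blast
  then have "a$i - c$i = 2 * pi * of_int (k1 + k2)" by (simp add: algebra_simps)
  then show "\<exists>k::int. a$i - c$i = 2 * pi * of_int k" by blast
qed
lemma torus_eq_refl: "torus_eq a a"
  unfolding torus_eq_def by (auto intro: exI[of _ 0])

lemma tau_fibre: assumes "valid_params P" "torus_eq th (c *\<^sub>R 1 + thdq)"
  shows "tau_e P th irs (pI P w irs th) = Knet P w irs thdq *v (w *\<^sub>R 1)"
proof -
  have b: "blkrot th = blkrot (thdq + c *\<^sub>R 1)" using blkrot_periodic[OF assms(2)] by (simp add: add.commute)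
  have "tau_e P th irs (pI P w irs th) = tau_e P (thdq + c *\<^sub>R 1) irs (pI P w irs (thdq + c *\<^sub>R 1))"
    using tau_e_cong[OF b, of P] pI_cong[OF b, of P] by simp
  also have "\<dots> = Knet P w irs (thdq + c *\<^sub>R 1) *v (w *\<^sub>R 1)" by (rule Knet_apply[symmetric])
  also have "\<dots> = Knet P w irs thdq *v (w *\<^sub>R 1)" by (simp add: Knet_shift[OF assms(1)])
  finally show ?thesis .
qed

lemma RtIs_fibre: assumes "valid_params P" "torus_eq th (c *\<^sub>R 1 + thdq)"
  shows "transpose (blkrot th) *v pI P w irs th = transpose (blkrot thdq) *v pI P w irs thdq"
proof -
  have b: "blkrot th = blkrot (thdq + c *\<^sub>R 1)" using blkrot_periodic[OF assms(2)] by (simp add: add.commute)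
  show ?thesis using RtIs_shift[OF assms(1), of thdq c w irs] b pI_cong[OF b, of P] by simp
qed

definition LRf :: "('n::finite, 'm::finite) mparams \<Rightarrow> real^'n \<Rightarrow> real^'n \<Rightarrow> real^('n\<times>2) \<Rightarrow> real^'n" where
  "LRf P ir th is = diagm (pLr P) *v ir + kron_row (diagm (pLm P)) e1 *v (transpose (blkrot th) *v is)"
definition LSf :: "('n::finite, 'm::finite) mparams \<Rightarrow> real^'n \<Rightarrow> real^'n \<Rightarrow> real^('n\<times>2) \<Rightarrow> real^('n\<times>2)" where
  "LSf P ir th is = LsM P *v is + blkrot th *v (kron_col (diagm (pLm P)) e1 *v ir)"

lemma flux_ok_iff: "flux_ok P th ir is lr ls \<longleftrightarrow> ls = LSf P ir th is \<and> lr = LRf P ir th is"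
  by (simp add: flux_ok_def LRf_def LSf_def)

lemma pihat_osc_parts: assumes "valid_params P"
  shows "pI P w irs (th + c *\<^sub>R 1) = osc c (pI P w irs th)"
    "pV P w irs (th + c *\<^sub>R 1) = osc c (pV P w irs th)"
    "pT P w irs (th + c *\<^sub>R 1) = osc c (pT P w irs th)"
  using pihat_osc[OF assms, of w irs th c] by (simp_all add: pihat_eq)

lemma kron_diag_osc: "kron (diagm d) I2 *v osc c p = osc c (kron (diagm d) I2 *v p)"
  by (rule osc_comm[OF kron_diag_comm])

lemma const_deriv_on: assumes "\<And>t. t \<in> S \<Longrightarrow> f t = k" "t \<in> S"
  shows "(f has_vector_derivative 0) (at t within S)"
  by (rule has_vector_derivative_transform[where f="\<lambda>t. k"]) (use assms in auto)

lemma explicit_solution: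
  assumes vp: "valid_params P"
    and tq: "torus_eq th0 ((s0 * w) *\<^sub>R 1 + thdq)"
    and ur: "ur = diagm (pRr P) *v irs"
    and um: "um = (diagm (pD P) + Knet P w irs thdq) *v (w *\<^sub>R 1)"
  shows "is_solution P (um, ur) S (\<lambda>t. w *\<^sub>R 1) (\<lambda>t. th0 + (w*t) *\<^sub>R 1)
     (\<lambda>t. LRf P irs (th0 + (w*t) *\<^sub>R 1) (osc (w*t) (pI P w irs th0)))
     (\<lambda>t. LSf P irs (th0 + (w*t) *\<^sub>R 1) (osc (w*t) (pI P w irs th0)))
     (\<lambda>t. osc (w*t) (pV P w irs th0)) (\<lambda>t. osc (w*t) (pT P w irs th0))
     (\<lambda>t. irs) (\<lambda>t. osc (w*t) (pI P w irs th0))"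
  unfolding is_solution_def
proof (intro ballI conjI)
  fix t assume tS: "t \<in> S"
  let ?I = "pI P w irs th0" and ?V = "pV P w irs th0" and ?T = "pT P w irs th0"
  have pIt: "osc (w*t) ?I = pI P w irs (th0 + (w*t) *\<^sub>R 1)" for t
    by (simp add: pihat_osc_parts[OF vp])
  show "flux_ok P (th0 + (w * t) *\<^sub>R 1) irs (osc (w * t) ?I)
     (LRf P irs (th0 + (w * t) *\<^sub>R 1) (osc (w * t) ?I)) (LSf P irs (th0 + (w * t) *\<^sub>R 1) (osc (w * t) ?I))"
    by (simp add: flux_ok_iff)
  have tq': "torus_eq (th0 + (w*t) *\<^sub>R 1) ((s0 * w + w * t) *\<^sub>R 1 + thdq)"
    using torus_eq_add[OF tq, of "(w*t) *\<^sub>R 1"] by (simp add: algebra_simps scaleR_add_left)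
  have tau: "tau_e P (th0 + (w*t) *\<^sub>R 1) irs (osc (w*t) ?I) = Knet P w irs thdq *v (w *\<^sub>R 1)"
    unfolding pIt by (rule tau_fibre[OF vp tq'])
  show "((\<lambda>s. diagm (pM P) *v (w *\<^sub>R 1)) has_vector_derivative
        - (diagm (pD P) *v (w *\<^sub>R 1)) - tau_e P (th0 + (w * t) *\<^sub>R 1) irs (osc (w * t) ?I) + fst (um, ur))
        (at t within S)"
    by (simp add: tau um mv_add_left)
  show "((\<lambda>t. th0 + (w * t) *\<^sub>R 1) has_vector_derivative w *\<^sub>R 1) (at t within S)"
    by (auto intro!: derivative_eq_intros)
  have lrc: "LRf P irs (th0 + (w * s) *\<^sub>R 1) (osc (w * s) ?I) = LRf P irs th0 ?I" for s
    unfolding pIt LRf_def using RtIs_shift[OF vp, of th0 "w * s" w irs] by simp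
  show "((\<lambda>t. LRf P irs (th0 + (w * t) *\<^sub>R 1) (osc (w * t) ?I)) has_vector_derivative
         - (diagm (pRr P) *v irs) + snd (um, ur)) (at t within S)"
    using const_deriv_on[OF lrc tS] by (simp add: ur)
  have lsf: "LSf P irs (th0 + (w * s) *\<^sub>R 1) (osc (w * s) ?I) = osc (w * s) (LsM P *v ?I + blkrot th0 *v b0 P irs)" for s
    by (simp add: LSf_def LsM_def kron_diag_osc blkrot_osc b0_def osc_add)
  have "((\<lambda>t. osc (w*t) (LsM P *v ?I + blkrot th0 *v b0 P irs)) has_vector_derivative
       w *\<^sub>R osc (w*t) (bj *v (LsM P *v ?I + blkrot th0 *v b0 P irs))) (at t within S)"
    by (rule osc_deriv)
  moreover have "w *\<^sub>R osc (w*t) (bj *v (LsM P *v ?I + blkrot th0 *v b0 P irs)) =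
      - (RsM P *v osc (w*t) ?I) + osc (w*t) ?V"
    by (simp add: osc_scaleR K1[OF vp] RsM_def kron_diag_osc osc_neg osc_add)
  ultimately show "((\<lambda>t. LSf P irs (th0 + (w * t) *\<^sub>R 1) (osc (w * t) ?I)) has_vector_derivative
         - (RsM P *v osc (w * t) ?I) + osc (w * t) ?V) (at t within S)"
    by (simp add: lsf)
  have cf: "CM P *v osc (w * s) ?V = osc (w * s) (CM P *v ?V)" for s
    by (simp add: CM_def kron_diag_osc)
  have "((\<lambda>t. osc (w*t) (CM P *v ?V)) has_vector_derivative w *\<^sub>R osc (w*t) (bj *v (CM P *v ?V))) (at t within S)"
    by (rule osc_deriv)
  moreover have "w *\<^sub>R osc (w*t) (bj *v (CM P *v ?V)) =
      - (GM P *v osc (w*t) ?V) - EM P *v osc (w*t) ?T - osc (w*t) ?I"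
    by (simp add: osc_scaleR K2[OF vp] GM_def kron_diag_osc osc_neg osc_diff osc_comm[OF EM_comm])
  ultimately show "((\<lambda>s. CM P *v osc (w * s) ?V) has_vector_derivative
         - (GM P *v osc (w * t) ?V) - EM P *v osc (w * t) ?T - osc (w * t) ?I) (at t within S)"
    by (simp add: cf)
  have lf: "LtM P *v osc (w * s) ?T = osc (w * s) (LtM P *v ?T)" for s
    by (simp add: LtM_def kron_diag_osc)
  have "((\<lambda>t. osc (w*t) (LtM P *v ?T)) has_vector_derivative w *\<^sub>R osc (w*t) (bj *v (LtM P *v ?T))) (at t within S)"
    by (rule osc_deriv)
  moreover have "w *\<^sub>R osc (w*t) (bj *v (LtM P *v ?T)) =
      - (RtM P *v osc (w*t) ?T) + transpose (EM P) *v osc (w*t) ?V"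
    by (simp add: osc_scaleR K3[OF vp] RtM_def kron_diag_osc osc_neg osc_add osc_comm[OF EMT_comm])
  ultimately show "((\<lambda>s. LtM P *v osc (w * s) ?T) has_vector_derivative
         - (RtM P *v osc (w * t) ?T) + transpose (EM P) *v osc (w * t) ?V) (at t within S)"
    by (simp add: lf)
qed

lemma explicit_in_Gamma:
  assumes vp: "valid_params P" and w: "w > 0"
    and tq: "torus_eq th0 ((s0 * w) *\<^sub>R 1 + thdq)"
  shows "in_Gamma P w irs thdq (w *\<^sub>R 1) (th0 + (w*t) *\<^sub>R 1) (osc (w*t) (pV P w irs th0))
     (osc (w*t) (pT P w irs th0)) irs (osc (w*t) (pI P w irs th0))"
proof -
  define T0 where "T0 = 2 * pi / w"
  have T0: "T0 > 0" using w by (simp add: T0_def)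
  define x where "x = s0 + t"
  define s where "s = x - T0 * of_int \<lfloor>x / T0\<rfloor>"
  have s0le: "0 \<le> s"
  proof -
    have "of_int \<lfloor>x / T0\<rfloor> \<le> x / T0" by linarith
    then have "T0 * of_int \<lfloor>x / T0\<rfloor> \<le> T0 * (x / T0)" by (rule mult_left_mono) (use T0 in auto)
    moreover have "T0 * (x / T0) = x" using T0 by simp
    ultimately show ?thesis by (simp add: s_def)
  qed
  have slt: "s < T0"
  proof -
    have "x / T0 < of_int \<lfloor>x / T0\<rfloor> + 1" by linarith
    then have "T0 * (x / T0) < T0 * (of_int \<lfloor>x / T0\<rfloor> + 1)" by (rule mult_strict_left_mono) (use T0 in auto)
    moreover have "T0 * (x / T0) = x" using T0 by simp
    ultimately show ?thesis by (simp add: s_def algebra_simps)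
  qed
  have sw: "s * w = (s0 * w + w * t) - 2 * pi * of_int \<lfloor>x / T0\<rfloor>"
    using w by (simp add: s_def x_def T0_def algebra_simps)
  have tq2: "torus_eq (th0 + (w*t) *\<^sub>R 1) ((s * w) *\<^sub>R 1 + thdq)"
    unfolding torus_eq_def
  proof
    fix i
    obtain k :: int where k: "th0$i - ((s0 * w) *\<^sub>R 1 + thdq)$i = 2 * pi * of_int k"
      using tq by (auto simp: torus_eq_def)
    have "(th0 + (w*t) *\<^sub>R 1)$i - ((s * w) *\<^sub>R 1 + thdq)$i = 2 * pi * of_int (k + \<lfloor>x / T0\<rfloor>)"
      using k by (simp add: sw algebra_simps)
    then show "\<exists>k::int. (th0 + (w*t) *\<^sub>R 1)$i - ((s * w) *\<^sub>R 1 + thdq)$i = 2 * pi * of_int k" by blast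
  qed
  have ph: "pihat P w irs ((s * w) *\<^sub>R 1 + thdq) = (osc (w*t) (pI P w irs th0), osc (w*t) (pV P w irs th0), osc (w*t) (pT P w irs th0))"
    using pihat_periodic[OF torus_eq_sym[OF tq2], of P w irs] pihat_osc[OF vp, of w irs th0 "w*t"] by simp
  show ?thesis unfolding in_Gamma_def
    using s0le slt tq2 ph by (auto simp: T0_def mult.commute)
qed

lemma Gamma_point:
  assumes vp: "valid_params P" and g: "in_Gamma P w irs thdq om th v it ir is"
  shows "ir = irs" "om = w *\<^sub>R 1" "\<exists>c. torus_eq th (c *\<^sub>R 1 + thdq)"
    "is = pI P w irs th" "v = pV P w irs th" "it = pT P w irs th"
proof -
  from g obtain s where tq: "torus_eq th ((s * w) *\<^sub>R 1 + thdq)"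
    and ph: "(is, v, it) = pihat P w irs ((s * w) *\<^sub>R 1 + thdq)"
    by (auto simp: in_Gamma_def)
  have "pihat P w irs ((s * w) *\<^sub>R 1 + thdq) = pihat P w irs th"
    by (rule pihat_periodic[OF torus_eq_sym[OF tq]])
  then have "(is, v, it) = (pI P w irs th, pV P w irs th, pT P w irs th)" using ph by (simp add: pihat_eq)
  then show "is = pI P w irs th" "v = pV P w irs th" "it = pT P w irs th" by auto
  show "\<exists>c. torus_eq th (c *\<^sub>R 1 + thdq)" using tq by blast
  show "ir = irs" "om = w *\<^sub>R 1" using g by (auto simp: in_Gamma_def)
qed

lemma at1_nonbot: "at (1::real) within {0..} \<noteq> bot"
  by (metis at_within_interior interior_real_atLeast greaterThan_iff zero_less_one at_neq_bot)

lemma necessity: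
  assumes vp: "valid_params P" and w: "w > 0"
    and ri: "renders_invariant P w irs thdq (um, ur)"
  shows "ur = diagm (pRr P) *v irs \<and> um = (diagm (pD P) + Knet P w irs thdq) *v (w *\<^sub>R 1)"
proof -
  let ?I = "pI P w irs thdq" and ?V = "pV P w irs thdq" and ?T = "pT P w irs thdq"
  have fl: "flux_ok P thdq irs ?I (LRf P irs thdq ?I) (LSf P irs thdq ?I)"
    by (simp add: flux_ok_iff)
  have g0: "in_Gamma P w irs thdq (w *\<^sub>R 1) thdq ?V ?T irs ?I"
    unfolding in_Gamma_def using w
    by (auto intro!: bexI[of _ 0] simp: torus_eq_refl pihat_eq)
  from ri have A: "\<forall>om0 th0 lr0 ls0 v0 it0 ir0 is0.
       flux_ok P th0 ir0 is0 lr0 ls0 \<and> in_Gamma P w irs thdq om0 th0 v0 it0 ir0 is0 \<longrightarrow>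
       (\<exists>om th lr ls v it ir is.
          is_solution P (um, ur) {0..} om th lr ls v it ir is \<and>
          om 0 = om0 \<and> th 0 = th0 \<and> lr 0 = lr0 \<and> ls 0 = ls0 \<and> v 0 = v0 \<and> it 0 = it0 \<and>
          (\<forall>t\<ge>0. in_Gamma P w irs thdq (om t) (th t) (v t) (it t) (ir t) (is t)))"
    unfolding renders_invariant_def by (rule conjunct1)
  obtain om th lr ls v it ir "is" where
    sol: "is_solution P (um, ur) {0..} om th lr ls v it ir is"
    and G: "\<forall>t\<ge>0. in_Gamma P w irs thdq (om t) (th t) (v t) (it t) (ir t) (is t)"
    using A[rule_format, OF conjI[OF fl g0]] by blast
  have irt: "ir t = irs" and omt: "om t = w *\<^sub>R 1" and ist: "is t = pI P w irs (th t)"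
    and tqt: "\<exists>c. torus_eq (th t) (c *\<^sub>R 1 + thdq)" if "t \<ge> 0" for t
    using Gamma_point[OF vp G[rule_format, OF that]] by auto
  have lrt: "lr t = LRf P irs thdq ?I" if "t \<in> {0..}" for t
  proof -
    from that have t: "t \<ge> 0" by simp
    obtain c where c: "torus_eq (th t) (c *\<^sub>R 1 + thdq)" using tqt[OF t] by blast
    have "lr t = LRf P irs (th t) (is t)"
      using sol that unfolding is_solution_def flux_ok_iff by (auto simp: irt[OF t])
    also have "\<dots> = LRf P irs thdq ?I"
      unfolding LRf_def ist[OF t] RtIs_fibre[OF vp c] ..
    finally show ?thesis .
  qed
  have omc: "diagm (pM P) *v om t = diagm (pM P) *v (w *\<^sub>R 1)" if "t \<in> {0..}" for t
    using omt that by simp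
  have one: "(1::real) \<in> {0..}" by simp
  from sol one have d1: "(lr has_vector_derivative (- (diagm (pRr P) *v ir 1) + ur)) (at 1 within {0..})"
    and d2: "((\<lambda>s. diagm (pM P) *v om s) has_vector_derivative
          (- (diagm (pD P) *v om 1) - tau_e P (th 1) (ir 1) (is 1) + um)) (at 1 within {0..})"
    unfolding is_solution_def by auto
  have "- (diagm (pRr P) *v ir 1) + ur = 0"
    using vector_derivative_unique_within[OF at1_nonbot d1 const_deriv_on[OF lrt one]] .
  then have ur: "ur = diagm (pRr P) *v irs" using irt[of 1] by (simp add: add.commute neg_eq_iff_add_eq_0 eq_neg_iff_add_eq_0)
  have "- (diagm (pD P) *v om 1) - tau_e P (th 1) (ir 1) (is 1) + um = 0"
    using vector_derivative_unique_within[OF at1_nonbot d2 const_deriv_on[OF omc one]] .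
  moreover obtain c where c: "torus_eq (th 1) (c *\<^sub>R 1 + thdq)" using tqt[of 1] by auto
  moreover have "tau_e P (th 1) (ir 1) (is 1) = Knet P w irs thdq *v (w *\<^sub>R 1)"
    using tau_fibre[OF vp c] irt[of 1] ist[of 1] by simp
  ultimately have "um = diagm (pD P) *v (w *\<^sub>R 1) + Knet P w irs thdq *v (w *\<^sub>R 1)"
    using omt[of 1] by (simp add: algebra_simps eq_neg_iff_add_eq_0 diff_eq_eq)
  then show ?thesis using ur by (simp add: mv_add_left)
qed

lemma existence_part:
  assumes vp: "valid_params P" and w: "w > 0"
    and ur: "ur = diagm (pRr P) *v irs"
    and um: "um = (diagm (pD P) + Knet P w irs thdq) *v (w *\<^sub>R 1)"
    and fl: "flux_ok P th0 ir0 is0 lr0 ls0" and g: "in_Gamma P w irs thdq om0 th0 v0 it0 ir0 is0"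
  shows "\<exists>om th lr ls v it ir is.
          is_solution P (um, ur) {0..} om th lr ls v it ir is \<and>
          om 0 = om0 \<and> th 0 = th0 \<and> lr 0 = lr0 \<and> ls 0 = ls0 \<and> v 0 = v0 \<and> it 0 = it0 \<and>
          (\<forall>t\<ge>0. in_Gamma P w irs thdq (om t) (th t) (v t) (it t) (ir t) (is t))"
proof -
  from g obtain s0 where tq: "torus_eq th0 ((s0 * w) *\<^sub>R 1 + thdq)"
    by (auto simp: in_Gamma_def)
  note gp = Gamma_point[OF vp g]
  show ?thesis
    apply (rule exI[of _ "\<lambda>t. w *\<^sub>R 1"], rule exI[of _ "\<lambda>t. th0 + (w*t) *\<^sub>R 1"],
       rule exI[of _ "\<lambda>t. LRf P irs (th0 + (w*t) *\<^sub>R 1) (osc (w*t) (pI P w irs th0))"],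
       rule exI[of _ "\<lambda>t. LSf P irs (th0 + (w*t) *\<^sub>R 1) (osc (w*t) (pI P w irs th0))"],
       rule exI[of _ "\<lambda>t. osc (w*t) (pV P w irs th0)"], rule exI[of _ "\<lambda>t. osc (w*t) (pT P w irs th0)"],
       rule exI[of _ "\<lambda>t. irs"], rule exI[of _ "\<lambda>t. osc (w*t) (pI P w irs th0)"])
    using explicit_solution[OF vp tq ur um, of "{0..}"] explicit_in_Gamma[OF vp w tq] gp fl
    by (simp add: osc_zero flux_ok_iff)
qed

lemma ode_unique:
  fixes z1 z2 :: "real \<Rightarrow> 'a::real_inner"
  assumes T: "T \<ge> 0"
    and d1: "\<And>t. t \<in> {0..T} \<Longrightarrow> (z1 has_vector_derivative f1 t) (at t within {0..T})"
    and d2: "\<And>t. t \<in> {0..T} \<Longrightarrow> (z2 has_vector_derivative f2 t) (at t within {0..T})"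
    and z0: "z1 0 = z2 0"
    and L: "\<And>t. t \<in> {0..T} \<Longrightarrow> norm (f1 t - f2 t) \<le> L * norm (z1 t - z2 t)"
  shows "\<And>t. t \<in> {0..T} \<Longrightarrow> z1 t = z2 t"
proof -
  define d where "d t = z1 t - z2 t" for t
  define h where "h t = exp (- 2 * L * t) * inner (d t) (d t)" for t
  have dd: "(d has_vector_derivative (f1 t - f2 t)) (at t within {0..T})" if "t \<in> {0..T}" for t
    unfolding d_def using d1[OF that] d2[OF that] by (rule has_vector_derivative_diff)
  have cont: "continuous_on {0..T} h"
  proof -
    have "continuous_on {0..T} d" using dd by (rule continuous_on_vector_derivative)
    then show ?thesis unfolding h_def by (intro continuous_intros)
  qed
  have hder: "\<exists>y. DERIV h t :> y \<and> y \<le> 0" if t: "0 < t" "t < T" for t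
  proof -
    have tin: "t \<in> {0..T}" using t by auto
    have at: "at t within {0..T} = at t"
      by (rule at_within_interior) (use t in simp)
    have dv: "(d has_vector_derivative (f1 t - f2 t)) (at t)" using dd[OF tin] by (simp add: at)
    have gi: "((\<lambda>t. inner (d t) (d t)) has_vector_derivative
        (inner (d t) (f1 t - f2 t) + inner (f1 t - f2 t) (d t))) (at t)"
      by (rule bounded_bilinear.has_vector_derivative[OF bounded_bilinear_inner dv dv])
    then have gr: "((\<lambda>t. inner (d t) (d t)) has_real_derivative (2 * inner (d t) (f1 t - f2 t))) (at t)"
      by (simp add: has_real_derivative_iff_has_vector_derivative inner_commute)
    have er: "((\<lambda>t. exp (- 2 * L * t)) has_real_derivative (exp (- 2 * L * t) * (- 2 * L))) (at t)"
      by (auto intro!: derivative_eq_intros)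
    have hd: "(h has_real_derivative (exp (- 2 * L * t) * (- 2 * L) * inner (d t) (d t)
         + exp (- 2 * L * t) * (2 * inner (d t) (f1 t - f2 t)))) (at t)"
      unfolding h_def using DERIV_mult[OF er gr] by (simp add: algebra_simps)
    have "inner (d t) (f1 t - f2 t) \<le> norm (d t) * norm (f1 t - f2 t)"
      by (rule order_trans[OF abs_ge_self Cauchy_Schwarz_ineq2])
    also have "\<dots> \<le> norm (d t) * (L * norm (d t))"
      by (rule mult_left_mono) (use L[OF tin] in \<open>auto simp: d_def\<close>)
    also have "\<dots> = L * inner (d t) (d t)" by (simp add: power2_norm_eq_inner[symmetric] power2_eq_square)
    finally have a: "inner (d t) (f1 t - f2 t) \<le> L * inner (d t) (d t)" .
    have m: "exp (- 2 * L * t) * (2 * inner (d t) (f1 t - f2 t)) \<le> exp (- 2 * L * t) * (2 * (L * inner (d t) (d t)))"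
      by (rule mult_left_mono) (use a in auto)
    have "exp (- 2 * L * t) * (- 2 * L) * inner (d t) (d t)
         + exp (- 2 * L * t) * (2 * inner (d t) (f1 t - f2 t)) \<le> 0"
      using m by (simp add: algebra_simps)
    with hd show ?thesis by blast
  qed
  fix t assume t: "t \<in> {0..T}"
  have "h t \<le> h 0"
  proof (cases "t = 0")
    case True then show ?thesis by simp
  next
    case False
    then have t0: "0 < t" using t by auto
    have c2: "continuous_on {0..t} h" using cont by (rule continuous_on_subset) (use t in auto)
    have hd2: "\<And>x. 0 < x \<Longrightarrow> x < t \<Longrightarrow> \<exists>y. DERIV h x :> y \<and> y \<le> 0" using hder t by auto
    show ?thesis using DERIV_nonpos_imp_decreasing_open[of 0 t h, OF _ hd2 c2] t0 by simp
  qed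
  moreover have "h 0 = 0" by (simp add: h_def d_def z0)
  ultimately have "exp (- 2 * L * t) * inner (d t) (d t) \<le> 0" by (simp add: h_def)
  then have "inner (d t) (d t) \<le> 0" by (simp add: mult_le_0_iff)
  then have "d t = 0" using inner_ge_zero[of "d t"] by simp
  then show "z1 t = z2 t" by (simp add: d_def)
qed

lemma sin_lip: "\<bar>sin a - sin b\<bar> \<le> \<bar>a - (b::real)\<bar>"
proof -
  have "\<bar>sin a - sin b\<bar> = 2 * \<bar>sin ((a - b) / 2)\<bar> * \<bar>cos ((a + b) / 2)\<bar>"
    by (simp add: sin_diff_sin abs_mult)
  also have "\<dots> \<le> 2 * \<bar>(a - b) / 2\<bar> * 1"
    by (intro mult_mono abs_sin_x_le_abs_x) auto
  finally show ?thesis by simp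
qed

lemma cos_lip: "\<bar>cos a - cos b\<bar> \<le> \<bar>a - (b::real)\<bar>"
proof -
  have "\<bar>cos a - cos b\<bar> = 2 * \<bar>sin ((a + b) / 2)\<bar> * \<bar>sin ((b - a) / 2)\<bar>"
    by (simp add: cos_diff_cos abs_mult)
  also have "\<dots> \<le> 2 * 1 * \<bar>(b - a) / 2\<bar>"
    by (intro mult_mono abs_sin_x_le_abs_x) auto
  finally show ?thesis by simp
qed

definition mnorm :: "real^'a^'b \<Rightarrow> real" where
  "mnorm A = (\<Sum>i\<in>UNIV. \<Sum>j\<in>UNIV. \<bar>A$i$j\<bar>)"

lemma mnorm_bound: "norm (A *v x) \<le> mnorm A * norm x"
proof -
  have "norm (A *v x) \<le> (\<Sum>i\<in>UNIV. \<bar>(A *v x)$i\<bar>)" by (rule norm_le_l1_cart)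
  also have "\<dots> \<le> (\<Sum>i\<in>UNIV. \<Sum>j\<in>UNIV. \<bar>A$i$j\<bar> * norm x)"
  proof (rule sum_mono)
    fix i
    have "\<bar>(A *v x)$i\<bar> = \<bar>\<Sum>j\<in>UNIV. A$i$j * x$j\<bar>" by (simp add: matrix_vector_mult_def)
    also have "\<dots> \<le> (\<Sum>j\<in>UNIV. \<bar>A$i$j * x$j\<bar>)" by (rule sum_abs)
    also have "\<dots> \<le> (\<Sum>j\<in>UNIV. \<bar>A$i$j\<bar> * norm x)"
      by (rule sum_mono) (simp add: abs_mult mult_left_mono component_le_norm_cart)
    finally show "\<bar>(A *v x)$i\<bar> \<le> (\<Sum>j\<in>UNIV. \<bar>A$i$j\<bar> * norm x)" .
  qed
  also have "\<dots> = mnorm A * norm x" by (simp add: mnorm_def sum_distrib_right)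
  finally show ?thesis .
qed

lemma mnorm_entry_bound: fixes A :: "real^'a^'b" assumes "\<And>i j. \<bar>A$i$j\<bar> \<le> c"
  shows "mnorm A \<le> of_nat (CARD('b) * CARD('a)) * c"
proof -
  have "mnorm A \<le> (\<Sum>i\<in>(UNIV::'b set). \<Sum>j\<in>(UNIV::'a set). c)"
    unfolding mnorm_def by (intro sum_mono assms)
  then show ?thesis by (simp add: ac_simps)
qed

lemma rot_entry: "\<bar>rot t $ a $ b\<bar> \<le> 1"
  using exhaust_2[of a] exhaust_2[of b] by (auto simp: rot_def)

lemma blkrot_entry: "\<bar>blkrot th $ p $ q\<bar> \<le> 1"
  by (simp add: blkrot_def rot_entry)

lemma rot_entry_diff: "\<bar>rot t $ a $ b - rot s $ a $ b\<bar> \<le> \<bar>t - s\<bar>"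
proof -
  have "\<bar>- sin t - - sin s\<bar> \<le> \<bar>t - s\<bar>" using sin_lip[of s t] by (simp add: abs_minus_commute)
  then show ?thesis using exhaust_2[of a] exhaust_2[of b] sin_lip[of t s] cos_lip[of t s] by (auto simp: rot_def)
qed

lemma blkrot_entry_diff: "\<bar>(blkrot a - blkrot b) $ p $ q\<bar> \<le> norm (a - b)"
proof -
  have "\<bar>(blkrot a - blkrot b) $ p $ q\<bar> \<le> \<bar>a $ fst p - b $ fst p\<bar>"
    by (simp add: blkrot_def rot_entry_diff)
  also have "\<dots> \<le> norm (a - b)" using component_le_norm_cart[of "a - b" "fst p"] by simp
  finally show ?thesis .
qed

lemma mnorm_transpose: "mnorm (transpose A) = mnorm A"
  unfolding mnorm_def transpose_def by (subst sum.swap) simp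

lemma transpose_diff: "transpose (A - B) = transpose A - transpose (B::real^'a^'b)"
  by (simp add: transpose_def vec_eq_iff)

lemma mnorm_le_bound: "mnorm A \<le> M \<Longrightarrow> norm (A *v x) \<le> M * norm x"
  by (rule order_trans[OF mnorm_bound mult_right_mono]) auto

lemma blkrot_norm: "norm (blkrot th *v x) \<le> of_nat (CARD('n\<times>2) * CARD('n\<times>2)) * norm x"
  for th :: "real^'n::finite"
  by (rule mnorm_le_bound) (use mnorm_entry_bound[of "blkrot th" 1, OF blkrot_entry] in simp)

lemma blkrotT_norm: "norm (transpose (blkrot th) *v x) \<le> of_nat (CARD('n\<times>2) * CARD('n\<times>2)) * norm x"
  for th :: "real^'n::finite"
  by (rule mnorm_le_bound) (use mnorm_entry_bound[of "blkrot th" 1, OF blkrot_entry] in \<open>simp add: mnorm_transpose\<close>)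

lemma blkrot_diff_norm: "norm ((blkrot a - blkrot b) *v x) \<le> of_nat (CARD('n\<times>2) * CARD('n\<times>2)) * norm (a - b) * norm x"
  for a :: "real^'n::finite"
  by (rule mnorm_le_bound) (use mnorm_entry_bound[of "blkrot a - blkrot b" "norm (a - b)", OF blkrot_entry_diff] in simp)

lemma blkrotT_diff_norm: "norm ((transpose (blkrot a) - transpose (blkrot b)) *v x) \<le> of_nat (CARD('n\<times>2) * CARD('n\<times>2)) * norm (a - b) * norm x"
  for a :: "real^'n::finite"
  by (rule mnorm_le_bound) (use mnorm_entry_bound[of "blkrot a - blkrot b" "norm (a - b)", OF blkrot_entry_diff] in
     \<open>simp add: mnorm_transpose transpose_diff[symmetric]\<close>)

lemma lin_bound: "\<exists>K\<ge>0. \<forall>x. norm (A *v x) \<le> K * norm (x::real^'a)" for A :: "real^'a^'b"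
  using bounded_linear.nonneg_bounded[OF matrix_vector_mul_bounded_linear[of A]]
  by (metis mult.commute)

lemma diag_bound: "norm (diagm a *v x) \<le> norm a * norm x"
proof -
  have e: "diagm a *v x = (\<chi> i. a$i * x$i)"
    by (simp add: diagm_def matrix_vector_mult_def vec_eq_iff if_distrib if_distribR sum.delta cong: if_cong)
  have "norm (\<chi> i. a$i * x$i) \<le> norm a * norm x"
  proof -
    have "(norm (\<chi> i. a$i * x$i))^2 = (\<Sum>i\<in>UNIV. (a$i)^2 * (x$i)^2)"
      by (simp add: norm_vec_def L2_set_def power_mult_distrib real_sqrt_pow2 sum_nonneg)
    also have "\<dots> \<le> (\<Sum>i\<in>UNIV. (a$i)^2 * (norm x)^2)"
    proof (intro sum_mono mult_left_mono)
      fix i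
      have "\<bar>x$i\<bar> \<le> \<bar>norm x\<bar>" using component_le_norm_cart[of x i] by simp
      then show "(x$i)^2 \<le> (norm x)^2" by (simp only: abs_le_square_iff)
    qed simp
    also have "\<dots> = (norm a * norm x)^2"
      by (simp add: norm_vec_def L2_set_def power_mult_distrib real_sqrt_pow2 sum_nonneg sum_distrib_right)
    finally show ?thesis by (rule power2_le_imp_le) simp
  qed
  then show ?thesis by (simp add: e)
qed

lemma diag_mv: "(diagm a *v x) $ i = a$i * x$i"
  by (simp add: diagm_def matrix_vector_mult_def if_distrib if_distribR sum.delta cong: if_cong)

lemma krow_mv: "(kron_row (diagm d) v *v x) $ i = d$i * (\<Sum>c\<in>UNIV. v$c * x$(i,c))"
proof -
  have "(kron_row (diagm d) v *v x) $ i = (\<Sum>k\<in>UNIV. \<Sum>c\<in>UNIV. (if i = k then d$i else 0) * v$c * x$(k,c))"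
    by (simp add: kron_row_def matrix_vector_mult_def sum_pair_UNIV diagm_def)
  also have "\<dots> = (\<Sum>k\<in>UNIV. if i = k then (\<Sum>c\<in>UNIV. d$i * v$c * x$(k,c)) else 0)"
    by (rule sum.cong) auto
  also have "\<dots> = d$i * (\<Sum>c\<in>UNIV. v$c * x$(i,c))"
    by (simp add: sum.delta sum_distrib_left ac_simps)
  finally show ?thesis .
qed

lemma kcol_mv: "(kron_col (diagm d) v *v y) $ p = d$(fst p) * v$(snd p) * y$(fst p)"
proof -
  have "(kron_col (diagm d) v *v y) $ p = (\<Sum>j\<in>UNIV. if fst p = j then d$(fst p) * v$(snd p) * y$j else 0)"
    by (simp add: kron_col_def matrix_vector_mult_def diagm_def if_distrib if_distribR cong: if_cong)
  then show ?thesis by (simp add: sum.delta)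
qed

lemma blkrot_mv: "(blkrot th *v y) $ (i, c) = (\<Sum>k\<in>UNIV. rot (th$i) $ c $ k * y$(i,k))"
  by (simp add: blkrot_bd bd_mv)

lemma blkrotT_mv: "(transpose (blkrot th) *v y) $ (i, c) = (\<Sum>k\<in>UNIV. rot (th$i) $ k $ c * y$(i,k))"
  unfolding blkrot_bd bd_transpose bd_mv by (simp add: transpose_def)

lemma e1_comp: "e1 $ 1 = 1" "e1 $ 2 = 0" by (simp_all add: e1_def)
lemma e2_comp: "e2 $ 1 = 0" "e2 $ 2 = 1" by (simp_all add: e2_def)
lemma rot_comp: "rot t $ 1 $ 1 = cos t" "rot t $ 1 $ 2 = - sin t" "rot t $ 2 $ 1 = sin t" "rot t $ 2 $ 2 = cos t"
  by (simp_all add: rot_def)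

lemma sum_UNIV_2: "(\<Sum>k\<in>(UNIV::2 set). f k) = f 1 + f 2"
  by (simp add: sum_2)

lemma inner_pair: "inner x (y::real^('n::finite\<times>2)) = (\<Sum>i\<in>UNIV. x$(i,1) * y$(i,1) + x$(i,2) * y$(i,2))"
  by (simp add: inner_vec_def sum_pair_UNIV sum_UNIV_2)

lemma norm2_pair: "(norm (x::real^('n::finite\<times>2)))^2 = (\<Sum>i\<in>UNIV. (x$(i,1))^2 + (x$(i,2))^2)"
  unfolding power2_norm_eq_inner inner_pair by (simp add: power2_eq_square)

lemma norm2_vec: "(norm (x::real^'n::finite))^2 = (\<Sum>i\<in>UNIV. (x$i)^2)"
  unfolding power2_norm_eq_inner inner_vec_def by (simp add: power2_eq_square)

lemma flux_quad: "inner ir (LRf P ir th is) + inner is (LSf P ir th is) =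
   (\<Sum>i\<in>UNIV. pLr P $ i * (ir$i)^2 + 2 * pLm P $ i * ir$i * (cos (th$i) * is$(i,1) + sin (th$i) * is$(i,2))
      + pLs P $ i * ((is$(i,1))^2 + (is$(i,2))^2))"
proof -
  have A: "inner ir (LRf P ir th is) = (\<Sum>i\<in>UNIV. pLr P $ i * (ir$i)^2 + pLm P $ i * ir$i * (cos (th$i) * is$(i,1) + sin (th$i) * is$(i,2)))"
    by (simp add: LRf_def inner_vec_def diag_mv krow_mv blkrotT_mv sum_UNIV_2 e1_comp rot_comp
        algebra_simps power2_eq_square sum.distrib)
  have B: "inner is (LSf P ir th is) = (\<Sum>i\<in>UNIV. pLs P $ i * ((is$(i,1))^2 + (is$(i,2))^2) + pLm P $ i * ir$i * (cos (th$i) * is$(i,1) + sin (th$i) * is$(i,2)))"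
    by (simp add: LSf_def LsM_def inner_pair kron_diag_mv blkrot_mv kcol_mv sum_UNIV_2 e1_comp rot_comp
        algebra_simps power2_eq_square sum.distrib)
  show ?thesis unfolding A B by (simp add: sum.distrib[symmetric] algebra_simps)
qed

lemma quad_scalar:
  fixes Lr Ls Lm c a s1 s2 co si :: real
  assumes Lr: "Lr > 0" and Ls: "Ls > 0" and det: "Ls * Lr - Lm^2 > 0" and c0: "c \<ge> 0"
    and cle: "c * (Lr + Ls) \<le> Ls * Lr - Lm^2" and cs: "co^2 + si^2 = 1"
  shows "c * (a^2 + (s1^2 + s2^2)) \<le> Lr * a^2 + 2 * Lm * a * (co * s1 + si * s2) + Ls * (s1^2 + s2^2)"
proof -
  define b where "b = co * s1 + si * s2"
  define e where "e = - si * s1 + co * s2"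
  have be: "s1^2 + s2^2 = b^2 + e^2"
  proof -
    have "b^2 + e^2 = (co^2 + si^2) * (s1^2 + s2^2)"
      by (simp add: b_def e_def power2_eq_square algebra_simps)
    then show ?thesis using cs by simp
  qed
  have "c * (Lr + Ls) < Ls * (Lr + Ls)"
  proof -
    have "Ls * Lr - Lm^2 \<le> Ls * Lr" by simp
    also have "\<dots> < Ls * (Lr + Ls)" using Ls by (simp add: algebra_simps)
    finally show ?thesis using cle by linarith
  qed
  then have cLs: "c < Ls" using Lr Ls by (simp add: mult_less_cancel_right)
  have "c * (Lr + Ls) < Lr * (Lr + Ls)"
  proof -
    have "Ls * Lr - Lm^2 \<le> Ls * Lr" by simp
    also have "\<dots> < Lr * (Lr + Ls)" using Lr by (simp add: algebra_simps)
    finally show ?thesis using cle by linarith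
  qed
  then have cLr: "c < Lr" using Lr Ls by (simp add: mult_less_cancel_right)
  define p where "p = Lr - c"
  define q where "q = Ls - c"
  have p: "p > 0" using cLr by (simp add: p_def)
  have pq: "p * q - Lm^2 \<ge> 0"
  proof -
    have "p * q - Lm^2 = (Ls * Lr - Lm^2) - c * (Lr + Ls) + c^2"
      by (simp add: p_def q_def power2_eq_square algebra_simps)
    moreover have "c^2 \<ge> 0" by simp
    ultimately show ?thesis using cle by linarith
  qed
  have key: "p * (p * a^2 + 2 * Lm * a * b + q * b^2) = (p * a + Lm * b)^2 + (p * q - Lm^2) * b^2"
    by (simp add: power2_eq_square algebra_simps)
  have "0 \<le> (p * a + Lm * b)^2 + (p * q - Lm^2) * b^2"
    using pq by (simp add: add_nonneg_nonneg)
  then have "0 \<le> p * (p * a^2 + 2 * Lm * a * b + q * b^2)" using key by simp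
  then have Q: "0 \<le> p * a^2 + 2 * Lm * a * b + q * b^2" using p by (simp add: zero_le_mult_iff)
  have E: "0 \<le> q * e^2" using cLs by (simp add: q_def)
  have "Lr * a^2 + 2 * Lm * a * (co * s1 + si * s2) + Ls * (s1^2 + s2^2) - c * (a^2 + (s1^2 + s2^2))
      = (p * a^2 + 2 * Lm * a * b + q * b^2) + q * e^2"
    unfolding be by (simp add: p_def q_def b_def algebra_simps)
  then show ?thesis using Q E by linarith
qed

lemma flux_coercive: fixes P :: "('n::finite, 'm::finite) mparams" assumes vp: "valid_params P"
  shows "\<exists>c>0. \<forall>th ir is. c * ((norm ir)^2 + (norm is)^2) \<le> inner ir (LRf P ir th is) + inner is (LSf P ir th is)"
proof -
  note vpos = valid_pos[OF vp]
  define cc where "cc i = (pLs P $ i * pLr P $ i - (pLm P $ i)^2) / (pLr P $ i + pLs P $ i)" for i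
  define c where "c = Min (range cc)"
  have ccpos: "cc i > 0" for i
    unfolding cc_def using vpos by (intro divide_pos_pos) (auto intro: add_pos_pos)
  have cin: "c \<in> range cc" unfolding c_def by (rule Min_in) auto
  have c0: "c > 0" using cin ccpos by auto
  have cle: "c \<le> cc i" for i unfolding c_def by (rule Min_le) auto
  have cle2: "c * (pLr P $ i + pLs P $ i) \<le> pLs P $ i * pLr P $ i - (pLm P $ i)^2" for i
  proof -
    have "pLr P $ i + pLs P $ i > 0" using vpos by (auto intro: add_pos_pos)
    then show ?thesis using cle[of i] by (simp add: cc_def pos_le_divide_eq)
  qed
  show ?thesis
  proof (intro exI[of _ c] conjI allI)
    show "c > 0" by (rule c0)
    fix th ir :: "real^'n" and "is" :: "real^('n\<times>2)"
    have "c * ((norm ir)^2 + (norm is)^2) = (\<Sum>i\<in>UNIV. c * ((ir$i)^2 + ((is$(i,1))^2 + (is$(i,2))^2)))"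
      unfolding norm2_vec[of ir] norm2_pair[of "is"] by (simp add: sum_distrib_left sum.distrib algebra_simps)
    also have "\<dots> \<le> (\<Sum>i\<in>UNIV. pLr P $ i * (ir$i)^2 + 2 * pLm P $ i * ir$i * (cos (th$i) * is$(i,1) + sin (th$i) * is$(i,2))
      + pLs P $ i * ((is$(i,1))^2 + (is$(i,2))^2))"
      by (intro sum_mono quad_scalar) (use vpos c0 cle2 in \<open>auto simp: less_imp_le\<close>)
    also have "\<dots> = inner ir (LRf P ir th is) + inner is (LSf P ir th is)"
      by (rule flux_quad[symmetric])
    finally show "c * ((norm ir)^2 + (norm is)^2) \<le> inner ir (LRf P ir th is) + inner is (LSf P ir th is)" .
  qed
qed

lemma flux_bound: fixes P :: "('n::finite, 'm::finite) mparams" assumes vp: "valid_params P"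
  shows "\<exists>K\<ge>0. \<forall>th ir is. norm ir + norm is \<le> K * (norm (LRf P ir th is) + norm (LSf P ir th is))"
proof -
  obtain c where c: "c > 0" and co: "\<And>th ir is. c * ((norm ir)^2 + (norm is)^2) \<le> inner ir (LRf P ir th is) + inner is (LSf P ir th is)"
    using flux_coercive[OF vp] by blast
  show ?thesis
  proof (intro exI[of _ "2 / c"] conjI allI)
    show "2 / c \<ge> 0" using c by simp
    fix th ir :: "real^'n" and "is" :: "real^('n\<times>2)"
    let ?a = "norm ir" and ?b = "norm is" and ?R = "norm (LRf P ir th is) + norm (LSf P ir th is)"
    have "inner ir (LRf P ir th is) + inner is (LSf P ir th is) \<le> ?a * norm (LRf P ir th is) + ?b * norm (LSf P ir th is)"
      by (intro add_mono order_trans[OF abs_ge_self Cauchy_Schwarz_ineq2])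
    also have "\<dots> \<le> (?a + ?b) * ?R"
      by (simp add: algebra_simps add_nonneg_nonneg mult_nonneg_nonneg)
    finally have h: "c * (?a^2 + ?b^2) \<le> (?a + ?b) * ?R" using co[of ir "is" th] by linarith
    have h2: "(?a + ?b)^2 \<le> 2 * (?a^2 + ?b^2)"
      using sum_squares_bound[of ?a ?b] by (simp add: power2_eq_square algebra_simps)
    have "c * (?a + ?b)^2 \<le> 2 * ((?a + ?b) * ?R)"
      using mult_left_mono[OF h2, of c] h c by linarith
    then have "c * ((?a + ?b) * (?a + ?b)) \<le> (?a + ?b) * (2 * ?R)" by (simp add: power2_eq_square algebra_simps)
    then have "(?a + ?b) * (c * (?a + ?b)) \<le> (?a + ?b) * (2 * ?R)" by (simp add: algebra_simps)
    then have "c * (?a + ?b) \<le> 2 * ?R \<or> ?a + ?b = 0"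
      by (metis add_nonneg_nonneg mult_le_cancel_left norm_ge_zero order_le_less not_less)
    moreover have "0 \<le> 2 / c * ?R" using c by simp
    moreover have "c * (?a + ?b) \<le> 2 * ?R \<Longrightarrow> ?a + ?b \<le> 2 / c * ?R"
      using c by (simp add: field_simps)
    ultimately show "?a + ?b \<le> 2 / c * ?R" by linarith
  qed
qed

lemma LRf_diff: "LRf P ir th is - LRf P ir' th is' = LRf P (ir - ir') th (is - is')"
  by (simp add: LRf_def matrix_vector_mult_diff_distrib algebra_simps)
lemma LSf_diff: "LSf P ir th is - LSf P ir' th is' = LSf P (ir - ir') th (is - is')"
  by (simp add: LSf_def matrix_vector_mult_diff_distrib algebra_simps)
lemma LRf_th_diff: "LRf P ir th2 is - LRf P ir th1 is =
   kron_row (diagm (pLm P)) e1 *v ((transpose (blkrot th2) - transpose (blkrot th1)) *v is)"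
  by (simp add: LRf_def matrix_vector_mult_diff_distrib matrix_vector_mult_diff_rdistrib)
lemma LSf_th_diff: "LSf P ir th2 is - LSf P ir th1 is =
   (blkrot th2 - blkrot th1) *v (kron_col (diagm (pLm P)) e1 *v ir)"
  by (simp add: LSf_def matrix_vector_mult_diff_rdistrib)
lemma diagm_diff: "diagm (a - b) *v x = diagm a *v x - diagm b *v x"
  by (simp add: vec_eq_iff diag_mv algebra_simps)

lemma diag_inv: assumes "\<forall>i. d$i > 0"
  shows "diagm (\<chi> i. inverse (d$i)) *v (diagm d *v x) = x"
  using assms by (simp add: vec_eq_iff diag_mv less_imp_neq[symmetric])

lemma kron_diag_inv: assumes "\<forall>i. d$i > 0"
  shows "kron (diagm (\<chi> i. inverse (d$i))) I2 *v (kron (diagm d) I2 *v x) = x"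
  using assms by (simp add: vec_eq_iff kron_diag_mv less_imp_neq[symmetric])

lemma lin_bound_obtain:
  fixes A :: "real^'a^'b"
  obtains K where "K \<ge> 0" "\<And>x. norm (A *v x) \<le> K * norm x"
proof -
  from lin_bound[of A] obtain K where K: "K \<ge> 0" "\<forall>x. norm (A *v x) \<le> K * norm x" by blast
  show thesis by (rule that[OF K(1)]) (use K(2) in blast)
qed

lemma lin_diff_bound: fixes A :: "real^'a^'b" assumes "\<And>x. norm (A *v x) \<le> K * norm x"
  shows "norm (A *v x - A *v y) \<le> K * norm (x - y)"
  using assms[of "x - y"] by (simp add: matrix_vector_mult_diff_distrib)

lemma norm6_le: "norm (a,b,c,d,e,f) \<le> norm a + norm b + norm c + norm d + norm e + norm f"
proof -
  have "norm (a,b,c,d,e,f) \<le> norm a + norm (b,c,d,e,f)" by (rule norm_Pair_le)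
  also have "norm (b,c,d,e,f) \<le> norm b + norm (c,d,e,f)" by (rule norm_Pair_le)
  also have "norm (c,d,e,f) \<le> norm c + norm (d,e,f)" by (rule norm_Pair_le)
  also have "norm (d,e,f) \<le> norm d + norm (e,f)" by (rule norm_Pair_le)
  also have "norm (e,f) \<le> norm e + norm f" by (rule norm_Pair_le)
  finally show ?thesis by (simp add: add.assoc)
qed

lemma norm6_comp:
  shows "norm a \<le> norm (a,b,c,d,e,f)" "norm b \<le> norm (a,b,c,d,e,f)" "norm c \<le> norm (a,b,c,d,e,f)"
    "norm d \<le> norm (a,b,c,d,e,f)" "norm e \<le> norm (a,b,c,d,e,f)" "norm f \<le> norm (a,b,c,d,e,f)"
proof -
  have s1: "norm (b,c,d,e,f) \<le> norm (a,b,c,d,e,f)" by (rule norm_snd_le)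
  have s2: "norm (c,d,e,f) \<le> norm (b,c,d,e,f)" by (rule norm_snd_le)
  have s3: "norm (d,e,f) \<le> norm (c,d,e,f)" by (rule norm_snd_le)
  have s4: "norm (e,f) \<le> norm (d,e,f)" by (rule norm_snd_le)
  show "norm a \<le> norm (a,b,c,d,e,f)" by (rule norm_fst_le)
  show "norm b \<le> norm (a,b,c,d,e,f)" using norm_fst_le[of b "(c,d,e,f)"] s1 by linarith
  show "norm c \<le> norm (a,b,c,d,e,f)" using norm_fst_le[of c "(d,e,f)"] s1 s2 by linarith
  show "norm d \<le> norm (a,b,c,d,e,f)" using norm_fst_le[of d "(e,f)"] s1 s2 s3 by linarith
  show "norm e \<le> norm (a,b,c,d,e,f)" using norm_fst_le[of e f] s1 s2 s3 s4 by linarith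
  show "norm f \<le> norm (a,b,c,d,e,f)" using norm_snd_le[of f e] s1 s2 s3 s4 by linarith
qed

lemma tau_diff: "tau_e P th1 ir1 is1 - tau_e P th2 ir2 is2 =
   - (diagm (ir1 - ir2) *v (kron_row (diagm (pLm P)) e2 *v (transpose (blkrot th1) *v is1))
      + diagm ir2 *v (kron_row (diagm (pLm P)) e2 *v (transpose (blkrot th1) *v (is1 - is2)))
      + diagm ir2 *v (kron_row (diagm (pLm P)) e2 *v ((transpose (blkrot th1) - transpose (blkrot th2)) *v is2)))"
  by (simp add: tau_e_def diagm_diff matrix_vector_mult_diff_distrib matrix_vector_mult_diff_rdistrib algebra_simps)

definition Fv :: "('n::finite, 'm::finite) mparams \<Rightarrow> (real^'n) \<times> (real^'n) \<Rightarrow> real^'n \<Rightarrow> real^'n \<Rightarrow> real^'n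
   \<Rightarrow> real^('n\<times>2) \<Rightarrow> real^('n\<times>2) \<Rightarrow> real^('m\<times>2) \<Rightarrow> _" where
  "Fv P u om th ir is v it = (- (diagm (pD P) *v om) - tau_e P th ir is + fst u, om, - (diagm (pRr P) *v ir) + snd u,
      - (RsM P *v is) + v, - (GM P *v v) - EM P *v it - is, - (RtM P *v it) + transpose (EM P) *v v)"

definition Zv :: "('n::finite, 'm::finite) mparams \<Rightarrow> real^'n \<Rightarrow> real^'n \<Rightarrow> real^'n
   \<Rightarrow> real^('n\<times>2) \<Rightarrow> real^('n\<times>2) \<Rightarrow> real^('m\<times>2) \<Rightarrow> _" where
  "Zv P om th lr ls v it = (diagm (pM P) *v om, th, lr, ls, CM P *v v, LtM P *v it)"

lemma nt1: "norm (- a - b) \<le> norm a + norm (b::'a::real_normed_vector)"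
  using norm_triangle_ineq4[of "- a" b] by simp
lemma nt2: "norm (- a + b) \<le> norm a + norm (b::'a::real_normed_vector)"
  using norm_triangle_ineq[of "- a" b] by simp
lemma nt3: "norm (- a - b - c) \<le> norm a + norm b + norm (c::'a::real_normed_vector)"
  using norm_triangle_ineq4[of "- a - b" c] nt1[of a b] by simp

lemma lip_point:
  fixes P :: "('n::finite, 'm::finite) mparams" and B :: real
  assumes vp: "valid_params P" and B: "B \<ge> 0"
  shows "\<exists>L. \<forall>om1 th1 lr1 ls1 v1 it1 ir1 is1 om2 th2 lr2 ls2 v2 it2 ir2 is2.
     flux_ok P th1 ir1 is1 lr1 ls1 \<longrightarrow> flux_ok P th2 ir2 is2 lr2 ls2 \<longrightarrow>
     norm is1 \<le> B \<longrightarrow> norm ir2 \<le> B \<longrightarrow> norm is2 \<le> B \<longrightarrow>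
     norm (Fv P u om1 th1 ir1 is1 v1 it1 - Fv P u om2 th2 ir2 is2 v2 it2)
       \<le> L * norm (Zv P om1 th1 lr1 ls1 v1 it1 - Zv P om2 th2 lr2 ls2 v2 it2)"
proof -
  note vpos = valid_pos[OF vp]
  define Mi where "Mi = diagm (\<chi> i. inverse (pM P $ i))"
  define Ci where "Ci = kron (diagm (\<chi> i. inverse (pC P $ i))) I2"
  define Li where "Li = kron (diagm (\<chi> i. inverse (pLt P $ i))) I2"
  define Cc where "Cc = real (CARD('n\<times>2) * CARD('n\<times>2))"
  have Cc0: "Cc \<ge> 0" by (simp add: Cc_def)
  obtain KMi where KMi: "KMi \<ge> 0" "\<And>x. norm (Mi *v x) \<le> KMi * norm x" by (rule lin_bound_obtain[of "Mi"]) blast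
  obtain KCi where KCi: "KCi \<ge> 0" "\<And>x. norm (Ci *v x) \<le> KCi * norm x" by (rule lin_bound_obtain[of "Ci"]) blast
  obtain KLi where KLi: "KLi \<ge> 0" "\<And>x. norm (Li *v x) \<le> KLi * norm x" by (rule lin_bound_obtain[of "Li"]) blast
  obtain KD where KD: "KD \<ge> 0" "\<And>x. norm (diagm (pD P) *v x) \<le> KD * norm x" by (rule lin_bound_obtain[of "diagm (pD P)"]) blast
  obtain KRr where KRr: "KRr \<ge> 0" "\<And>x. norm (diagm (pRr P) *v x) \<le> KRr * norm x" by (rule lin_bound_obtain[of "diagm (pRr P)"]) blast
  obtain KRs where KRs: "KRs \<ge> 0" "\<And>x. norm (RsM P *v x) \<le> KRs * norm x" by (rule lin_bound_obtain[of "RsM P"]) blast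
  obtain KG where KG: "KG \<ge> 0" "\<And>x. norm (GM P *v x) \<le> KG * norm x" by (rule lin_bound_obtain[of "GM P"]) blast
  obtain KE where KE: "KE \<ge> 0" "\<And>x. norm (EM P *v x) \<le> KE * norm x" by (rule lin_bound_obtain[of "EM P"]) blast
  obtain KRt where KRt: "KRt \<ge> 0" "\<And>x. norm (RtM P *v x) \<le> KRt * norm x" by (rule lin_bound_obtain[of "RtM P"]) blast
  obtain KET where KET: "KET \<ge> 0" "\<And>x. norm (transpose (EM P) *v x) \<le> KET * norm x" by (rule lin_bound_obtain[of "transpose (EM P)"]) blast
  obtain Kr1 where Kr1: "Kr1 \<ge> 0" "\<And>x. norm (kron_row (diagm (pLm P)) e1 *v x) \<le> Kr1 * norm x" by (rule lin_bound_obtain[of "kron_row (diagm (pLm P)) e1"]) blast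
  obtain Kr2 where Kr2: "Kr2 \<ge> 0" "\<And>x. norm (kron_row (diagm (pLm P)) e2 *v x) \<le> Kr2 * norm x" by (rule lin_bound_obtain[of "kron_row (diagm (pLm P)) e2"]) blast
  obtain Kc1 where Kc1: "Kc1 \<ge> 0" "\<And>x. norm (kron_col (diagm (pLm P)) e1 *v x) \<le> Kc1 * norm x" by (rule lin_bound_obtain[of "kron_col (diagm (pLm P)) e1"]) blast
  obtain Kf where Kf: "Kf \<ge> 0" "\<And>th ir is. norm ir + norm is \<le> Kf * (norm (LRf P ir th is) + norm (LSf P ir th is))"
    using flux_bound[OF vp] by blast
  define Ky where "Ky = Kf * (2 + Kr1 * Cc * B + Cc * Kc1 * B)"
  define Kt where "Kt = 2 * Kr2 * Cc * B * Ky + B * Kr2 * Cc * B"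
  define L where "L = (KD * KMi + Kt) + KMi + KRr * Ky + (KRs * Ky + KCi) + (KG * KCi + KE * KLi + Ky) + (KRt * KLi + KET * KCi)"
  show ?thesis
  proof (intro exI[of _ L] allI impI)
    fix om1 th1 lr1 ls1 v1 it1 ir1 is1 om2 th2 lr2 ls2 v2 it2 ir2 is2
    assume f1: "flux_ok P th1 ir1 is1 lr1 ls1" and f2: "flux_ok P th2 ir2 is2 lr2 ls2"
      and b1: "norm is1 \<le> B" and b2: "norm ir2 \<le> B" and b3: "norm is2 \<le> B"
    define N where "N = norm (Zv P om1 th1 lr1 ls1 v1 it1 - Zv P om2 th2 lr2 ls2 v2 it2)"
    have N0: "N \<ge> 0" by (simp add: N_def)
    have zc: "norm (diagm (pM P) *v om1 - diagm (pM P) *v om2) \<le> N" "norm (th1 - th2) \<le> N"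
      "norm (lr1 - lr2) \<le> N" "norm (ls1 - ls2) \<le> N" "norm (CM P *v v1 - CM P *v v2) \<le> N"
      "norm (LtM P *v it1 - LtM P *v it2) \<le> N"
      unfolding N_def Zv_def diff_Pair by (rule norm6_comp)+
    have dom: "norm (om1 - om2) \<le> KMi * N"
    proof -
      have "om1 - om2 = Mi *v (diagm (pM P) *v om1) - Mi *v (diagm (pM P) *v om2)"
        unfolding Mi_def using vpos by (simp add: diag_inv)
      then have "norm (om1 - om2) \<le> KMi * norm (diagm (pM P) *v om1 - diagm (pM P) *v om2)"
        using lin_diff_bound[OF KMi(2)] by simp
      also have "\<dots> \<le> KMi * N" by (rule mult_left_mono[OF zc(1) KMi(1)])
      finally show ?thesis .
    qed
    have dv: "norm (v1 - v2) \<le> KCi * N"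
    proof -
      have "v1 - v2 = Ci *v (CM P *v v1) - Ci *v (CM P *v v2)"
        unfolding Ci_def CM_def using vpos by (simp add: kron_diag_inv)
      then have "norm (v1 - v2) \<le> KCi * norm (CM P *v v1 - CM P *v v2)"
        using lin_diff_bound[OF KCi(2)] by simp
      also have "\<dots> \<le> KCi * N" by (rule mult_left_mono[OF zc(5) KCi(1)])
      finally show ?thesis .
    qed
    have dit: "norm (it1 - it2) \<le> KLi * N"
    proof -
      have "it1 - it2 = Li *v (LtM P *v it1) - Li *v (LtM P *v it2)"
        unfolding Li_def LtM_def using vpos by (simp add: kron_diag_inv)
      then have "norm (it1 - it2) \<le> KLi * norm (LtM P *v it1 - LtM P *v it2)"
        using lin_diff_bound[OF KLi(2)] by simp
      also have "\<dots> \<le> KLi * N" by (rule mult_left_mono[OF zc(6) KLi(1)])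
      finally show ?thesis .
    qed
    have fl1: "lr1 = LRf P ir1 th1 is1" "ls1 = LSf P ir1 th1 is1" using f1 by (auto simp: flux_ok_iff)
    have fl2: "lr2 = LRf P ir2 th2 is2" "ls2 = LSf P ir2 th2 is2" using f2 by (auto simp: flux_ok_iff)
    have dy: "norm (ir1 - ir2) + norm (is1 - is2) \<le> Ky * N"
    proof -
      have r: "LRf P (ir1 - ir2) th1 (is1 - is2) = (lr1 - lr2) + (LRf P ir2 th2 is2 - LRf P ir2 th1 is2)"
        by (simp add: fl1 fl2 LRf_diff[symmetric])
      have s: "LSf P (ir1 - ir2) th1 (is1 - is2) = (ls1 - ls2) + (LSf P ir2 th2 is2 - LSf P ir2 th1 is2)"
        by (simp add: fl1 fl2 LSf_diff[symmetric])
      have r2: "norm (LRf P ir2 th2 is2 - LRf P ir2 th1 is2) \<le> Kr1 * Cc * B * N"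
      proof -
        have "norm (LRf P ir2 th2 is2 - LRf P ir2 th1 is2) \<le> Kr1 * norm ((transpose (blkrot th2) - transpose (blkrot th1)) *v is2)"
          unfolding LRf_th_diff by (rule Kr1(2))
        also have "\<dots> \<le> Kr1 * (Cc * norm (th2 - th1) * norm is2)"
          by (rule mult_left_mono[OF _ Kr1(1)]) (unfold Cc_def, rule blkrotT_diff_norm)
        also have "\<dots> \<le> Kr1 * (Cc * N * B)"
          using zc(2) b3 Cc0 Kr1(1) N0 by (intro mult_left_mono mult_mono) (auto simp: norm_minus_commute)
        finally show ?thesis by (simp add: ac_simps)
      qed
      have s2: "norm (LSf P ir2 th2 is2 - LSf P ir2 th1 is2) \<le> Cc * Kc1 * B * N"
      proof -
        have "norm (LSf P ir2 th2 is2 - LSf P ir2 th1 is2) \<le> Cc * norm (th2 - th1) * norm (kron_col (diagm (pLm P)) e1 *v ir2)"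
          unfolding LSf_th_diff Cc_def by (rule blkrot_diff_norm)
        also have "\<dots> \<le> Cc * N * (Kc1 * B)"
          using zc(2) b2 Cc0 Kc1 N0
          by (intro mult_mono mult_left_mono order_trans[OF Kc1(2)]) (auto simp: norm_minus_commute)
        finally show ?thesis by (simp add: ac_simps)
      qed
      have "norm (ir1 - ir2) + norm (is1 - is2) \<le> Kf * (norm (LRf P (ir1 - ir2) th1 (is1 - is2)) + norm (LSf P (ir1 - ir2) th1 (is1 - is2)))"
        by (rule Kf(2))
      also have "\<dots> \<le> Kf * ((N + Kr1 * Cc * B * N) + (N + Cc * Kc1 * B * N))"
      proof (rule mult_left_mono[OF _ Kf(1)], rule add_mono)
        show "norm (LRf P (ir1 - ir2) th1 (is1 - is2)) \<le> N + Kr1 * Cc * B * N"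
          unfolding r using norm_triangle_le[OF add_mono[OF zc(3) r2]] .
        show "norm (LSf P (ir1 - ir2) th1 (is1 - is2)) \<le> N + Cc * Kc1 * B * N"
          unfolding s using norm_triangle_le[OF add_mono[OF zc(4) s2]] .
      qed
      also have "\<dots> = Ky * N" by (simp add: Ky_def algebra_simps)
      finally show ?thesis .
    qed
    have dir: "norm (ir1 - ir2) \<le> Ky * N" and dis: "norm (is1 - is2) \<le> Ky * N"
      using dy by (auto intro: order_trans[OF _ dy])
    have KyN: "0 \<le> Ky * N" using order_trans[OF norm_ge_zero dir] .
    have dtau: "norm (tau_e P th1 ir1 is1 - tau_e P th2 ir2 is2) \<le> Kt * N"
    proof -
      let ?Q = "\<lambda>x. kron_row (diagm (pLm P)) e2 *v x"
      have t1: "norm (diagm (ir1 - ir2) *v ?Q (transpose (blkrot th1) *v is1)) \<le> Ky * N * (Kr2 * (Cc * B))"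
      proof -
        have "norm (diagm (ir1 - ir2) *v ?Q (transpose (blkrot th1) *v is1)) \<le> norm (ir1 - ir2) * norm (?Q (transpose (blkrot th1) *v is1))"
          by (rule diag_bound)
        also have "\<dots> \<le> Ky * N * (Kr2 * (Cc * B))"
        proof (rule mult_mono[OF dir])
          have "norm (?Q (transpose (blkrot th1) *v is1)) \<le> Kr2 * norm (transpose (blkrot th1) *v is1)" by (rule Kr2(2))
          also have "\<dots> \<le> Kr2 * (Cc * B)"
            using blkrotT_norm[of th1 is1] b1 Cc0 Kr2(1) unfolding Cc_def
            by (intro mult_left_mono) (auto intro: order_trans mult_left_mono)
          finally show "norm (?Q (transpose (blkrot th1) *v is1)) \<le> Kr2 * (Cc * B)" .
        qed (use Kr2(1) Cc0 B KyN in auto)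
        finally show ?thesis .
      qed
      have t2: "norm (diagm ir2 *v ?Q (transpose (blkrot th1) *v (is1 - is2))) \<le> B * (Kr2 * (Cc * (Ky * N)))"
      proof -
        have "norm (diagm ir2 *v ?Q (transpose (blkrot th1) *v (is1 - is2))) \<le> norm ir2 * norm (?Q (transpose (blkrot th1) *v (is1 - is2)))"
          by (rule diag_bound)
        also have "\<dots> \<le> B * (Kr2 * (Cc * (Ky * N)))"
        proof (rule mult_mono[OF b2])
          have "norm (?Q (transpose (blkrot th1) *v (is1 - is2))) \<le> Kr2 * norm (transpose (blkrot th1) *v (is1 - is2))" by (rule Kr2(2))
          also have "\<dots> \<le> Kr2 * (Cc * (Ky * N))"
            using blkrotT_norm[of th1 "is1 - is2"] dis Cc0 Kr2(1) unfolding Cc_def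
            by (intro mult_left_mono) (auto intro: order_trans mult_left_mono)
          finally show "norm (?Q (transpose (blkrot th1) *v (is1 - is2))) \<le> Kr2 * (Cc * (Ky * N))" .
        qed (use B in auto)
        finally show ?thesis .
      qed
      have t3: "norm (diagm ir2 *v ?Q ((transpose (blkrot th1) - transpose (blkrot th2)) *v is2)) \<le> B * (Kr2 * (Cc * N * B))"
      proof -
        have "norm (diagm ir2 *v ?Q ((transpose (blkrot th1) - transpose (blkrot th2)) *v is2)) \<le> norm ir2 * norm (?Q ((transpose (blkrot th1) - transpose (blkrot th2)) *v is2))"
          by (rule diag_bound)
        also have "\<dots> \<le> B * (Kr2 * (Cc * N * B))"
        proof (rule mult_mono[OF b2])
          have "norm (?Q ((transpose (blkrot th1) - transpose (blkrot th2)) *v is2)) \<le> Kr2 * norm ((transpose (blkrot th1) - transpose (blkrot th2)) *v is2)" by (rule Kr2(2))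
          also have "\<dots> \<le> Kr2 * (Cc * norm (th1 - th2) * norm is2)"
            by (rule mult_left_mono[OF _ Kr2(1)]) (unfold Cc_def, rule blkrotT_diff_norm)
          also have "\<dots> \<le> Kr2 * (Cc * N * B)"
            using zc(2) b3 Cc0 Kr2(1) N0 by (intro mult_left_mono mult_mono) auto
          finally show "norm (?Q ((transpose (blkrot th1) - transpose (blkrot th2)) *v is2)) \<le> Kr2 * (Cc * N * B)" .
        qed (use B in auto)
        finally show ?thesis .
      qed
      have "norm (tau_e P th1 ir1 is1 - tau_e P th2 ir2 is2) \<le>
          norm (diagm (ir1 - ir2) *v ?Q (transpose (blkrot th1) *v is1))
          + norm (diagm ir2 *v ?Q (transpose (blkrot th1) *v (is1 - is2)))
          + norm (diagm ir2 *v ?Q ((transpose (blkrot th1) - transpose (blkrot th2)) *v is2))"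
        unfolding tau_diff norm_minus_cancel by (intro norm_triangle_le add_mono norm_triangle_ineq order_refl)
      also have "\<dots> \<le> Ky * N * (Kr2 * (Cc * B)) + B * (Kr2 * (Cc * (Ky * N))) + B * (Kr2 * (Cc * N * B))"
        using t1 t2 t3 by linarith
      also have "\<dots> = Kt * N" by (simp add: Kt_def algebra_simps)
      finally show ?thesis .
    qed
    have F: "Fv P u om1 th1 ir1 is1 v1 it1 - Fv P u om2 th2 ir2 is2 v2 it2 =
       (- (diagm (pD P) *v (om1 - om2)) - (tau_e P th1 ir1 is1 - tau_e P th2 ir2 is2), om1 - om2,
        - (diagm (pRr P) *v (ir1 - ir2)), - (RsM P *v (is1 - is2)) + (v1 - v2),
        - (GM P *v (v1 - v2)) - EM P *v (it1 - it2) - (is1 - is2),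
        - (RtM P *v (it1 - it2)) + transpose (EM P) *v (v1 - v2))"
      by (simp add: Fv_def matrix_vector_mult_diff_distrib algebra_simps)
    have c1: "norm (- (diagm (pD P) *v (om1 - om2)) - (tau_e P th1 ir1 is1 - tau_e P th2 ir2 is2)) \<le> (KD * KMi + Kt) * N"
    proof -
      have "norm (- (diagm (pD P) *v (om1 - om2)) - (tau_e P th1 ir1 is1 - tau_e P th2 ir2 is2))
         \<le> norm (diagm (pD P) *v (om1 - om2)) + norm (tau_e P th1 ir1 is1 - tau_e P th2 ir2 is2)"
        by (rule nt1)
      also have "\<dots> \<le> KD * (KMi * N) + Kt * N"
        by (intro add_mono dtau order_trans[OF KD(2)] mult_left_mono[OF dom KD(1)])
      finally show ?thesis by (simp add: algebra_simps)
    qed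
    have c3: "norm (- (diagm (pRr P) *v (ir1 - ir2))) \<le> KRr * Ky * N"
      using order_trans[OF KRr(2) mult_left_mono[OF dir KRr(1)]] by (simp add: ac_simps)
    have c4: "norm (- (RsM P *v (is1 - is2)) + (v1 - v2)) \<le> (KRs * Ky + KCi) * N"
    proof -
      have "norm (- (RsM P *v (is1 - is2)) + (v1 - v2)) \<le> norm (RsM P *v (is1 - is2)) + norm (v1 - v2)"
        by (rule nt2)
      also have "\<dots> \<le> KRs * (Ky * N) + KCi * N"
        by (intro add_mono dv order_trans[OF KRs(2)] mult_left_mono[OF dis KRs(1)])
      finally show ?thesis by (simp add: algebra_simps)
    qed
    have c5: "norm (- (GM P *v (v1 - v2)) - EM P *v (it1 - it2) - (is1 - is2)) \<le> (KG * KCi + KE * KLi + Ky) * N"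
    proof -
      have "norm (- (GM P *v (v1 - v2)) - EM P *v (it1 - it2) - (is1 - is2))
          \<le> norm (GM P *v (v1 - v2)) + norm (EM P *v (it1 - it2)) + norm (is1 - is2)"
        by (rule nt3)
      also have "\<dots> \<le> KG * (KCi * N) + KE * (KLi * N) + Ky * N"
        by (intro add_mono dis order_trans[OF KG(2)] mult_left_mono[OF dv KG(1)]
            order_trans[OF KE(2)] mult_left_mono[OF dit KE(1)])
      finally show ?thesis by (simp add: algebra_simps)
    qed
    have c6: "norm (- (RtM P *v (it1 - it2)) + transpose (EM P) *v (v1 - v2)) \<le> (KRt * KLi + KET * KCi) * N"
    proof -
      have "norm (- (RtM P *v (it1 - it2)) + transpose (EM P) *v (v1 - v2))
          \<le> norm (RtM P *v (it1 - it2)) + norm (transpose (EM P) *v (v1 - v2))"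
        by (rule nt2)
      also have "\<dots> \<le> KRt * (KLi * N) + KET * (KCi * N)"
        by (intro add_mono order_trans[OF KRt(2)] mult_left_mono[OF dit KRt(1)]
            order_trans[OF KET(2)] mult_left_mono[OF dv KET(1)])
      finally show ?thesis by (simp add: algebra_simps)
    qed
    have "norm (Fv P u om1 th1 ir1 is1 v1 it1 - Fv P u om2 th2 ir2 is2 v2 it2) \<le>
       (KD * KMi + Kt) * N + KMi * N + KRr * Ky * N + (KRs * Ky + KCi) * N + (KG * KCi + KE * KLi + Ky) * N
        + (KRt * KLi + KET * KCi) * N"
      unfolding F by (rule order_trans[OF norm6_le]) (intro add_mono c1 dom c3 c4 c5 c6)
    also have "\<dots> = L * N" by (simp add: L_def algebra_simps)
    finally show "norm (Fv P u om1 th1 ir1 is1 v1 it1 - Fv P u om2 th2 ir2 is2 v2 it2)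
       \<le> L * norm (Zv P om1 th1 lr1 ls1 v1 it1 - Zv P om2 th2 lr2 ls2 v2 it2)" by (simp add: N_def)
  qed
qed

lemma Zv_inj: assumes vp: "valid_params P" and e: "Zv P om th lr ls v it = Zv P om' th' lr' ls' v' it'"
  shows "om = om' \<and> th = th' \<and> lr = lr' \<and> ls = ls' \<and> v = v' \<and> it = it'"
proof -
  note vpos = valid_pos[OF vp]
  from e have e1: "diagm (pM P) *v om = diagm (pM P) *v om'" and e2: "th = th'" "lr = lr'" "ls = ls'"
    and e5: "CM P *v v = CM P *v v'" and e6: "LtM P *v it = LtM P *v it'"
    by (auto simp: Zv_def)
  have "om = om'" using arg_cong[OF e1, of "\<lambda>x. diagm (\<chi> i. inverse (pM P $ i)) *v x"] vpos by (simp add: diag_inv)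
  moreover have "v = v'" using arg_cong[OF e5, of "\<lambda>x. kron (diagm (\<chi> i. inverse (pC P $ i))) I2 *v x"] vpos
    by (simp add: kron_diag_inv CM_def)
  moreover have "it = it'" using arg_cong[OF e6, of "\<lambda>x. kron (diagm (\<chi> i. inverse (pLt P $ i))) I2 *v x"] vpos
    by (simp add: kron_diag_inv LtM_def)
  ultimately show ?thesis using e2 by simp
qed

lemma flux_unique: assumes vp: "valid_params P"
  and f1: "flux_ok P th ir is lr ls" and f2: "flux_ok P th ir' is' lr ls"
  shows "ir = ir' \<and> is = is'"
proof -
  obtain Kf where Kf: "Kf \<ge> 0" "\<And>th ir is. norm ir + norm is \<le> Kf * (norm (LRf P ir th is) + norm (LSf P ir th is))"
    using flux_bound[OF vp] by blast
  have "LRf P (ir - ir') th (is - is') = 0" "LSf P (ir - ir') th (is - is') = 0"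
    using f1 f2 by (auto simp: flux_ok_iff LRf_diff[symmetric] LSf_diff[symmetric])
  then have "norm (ir - ir') + norm (is - is') \<le> 0" using Kf(2)[of "ir - ir'" "is - is'" th] by simp
  then show ?thesis by (smt (verit) norm_ge_zero norm_eq_zero right_minus_eq)
qed

lemma bounded_on_interval:
  fixes f :: "real \<Rightarrow> 'a::real_normed_vector"
  assumes "continuous_on {0..T} f"
  obtains B where "B \<ge> 0" "\<And>t. t \<in> {0..T} \<Longrightarrow> norm (f t) \<le> B"
proof -
  have "compact (f ` {0..T})" by (rule compact_continuous_image[OF assms compact_Icc])
  then have "bounded (f ` {0..T})" by (rule compact_imp_bounded)
  then obtain a where a: "\<forall>x\<in>f ` {0..T}. norm x \<le> a" by (auto simp: bounded_iff)
  show thesis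
  proof (rule that[of "max a 0"])
    show "max a 0 \<ge> 0" by simp
    fix t assume "t \<in> {0..T}" then show "norm (f t) \<le> max a 0" using a by force
  qed
qed

lemma osc_norm: "norm (osc c p) \<le> norm p + norm (bj *v p)"
proof -
  have "norm (osc c p) \<le> norm (cos c *\<^sub>R p) + norm (sin c *\<^sub>R (bj *v p))"
    unfolding osc_def by (rule norm_triangle_ineq)
  also have "\<dots> \<le> 1 * norm p + 1 * norm (bj *v p)"
    unfolding norm_scaleR by (intro add_mono mult_right_mono) auto
  finally show ?thesis by simp
qed

lemma uniqueness_part:
  fixes P :: "('n::finite, 'm::finite) mparams"
  assumes vp: "valid_params P" and w: "w > 0"
    and ur: "ur = diagm (pRr P) *v irs"
    and um: "um = (diagm (pD P) + Knet P w irs thdq) *v (w *\<^sub>R 1)"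
    and sol: "is_solution P (um, ur) {0..T} om th lr ls v it ir is" and T: "0 \<le> T"
    and g0: "in_Gamma P w irs thdq (om 0) (th 0) (v 0) (it 0) (ir 0) (is 0)"
  shows "\<forall>t\<in>{0..T}. in_Gamma P w irs thdq (om t) (th t) (v t) (it t) (ir t) (is t)"
proof -
  obtain s0 where tq: "torus_eq (th 0) ((s0 * w) *\<^sub>R 1 + thdq)" using g0 by (auto simp: in_Gamma_def)
  note gp = Gamma_point[OF vp g0]
  define th0 where "th0 = th 0"
  define I0 where "I0 = pI P w irs th0"
  define V0 where "V0 = pV P w irs th0"
  define T0 where "T0 = pT P w irs th0"
  define om2 :: "real \<Rightarrow> real^'n" where "om2 = (\<lambda>t. w *\<^sub>R 1)"
  define th2 where "th2 = (\<lambda>t::real. th0 + (w*t) *\<^sub>R 1)"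
  define lr2 where "lr2 = (\<lambda>t. LRf P irs (th0 + (w*t) *\<^sub>R 1) (osc (w*t) I0))"
  define ls2 where "ls2 = (\<lambda>t. LSf P irs (th0 + (w*t) *\<^sub>R 1) (osc (w*t) I0))"
  define v2 where "v2 = (\<lambda>t. osc (w*t) V0)"
  define it2 where "it2 = (\<lambda>t. osc (w*t) T0)"
  define ir2 :: "real \<Rightarrow> real^'n" where "ir2 = (\<lambda>t. irs)"
  define is2 where "is2 = (\<lambda>t. osc (w*t) I0)"
  have tq0: "torus_eq th0 ((s0 * w) *\<^sub>R 1 + thdq)" using tq by (simp add: th0_def)
  have es: "is_solution P (um, ur) {0..T} om2 th2 lr2 ls2 v2 it2 ir2 is2"
    using explicit_solution[OF vp tq0 ur um, of "{0..T}"]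
    by (simp add: om2_def th2_def lr2_def ls2_def v2_def it2_def ir2_def is2_def I0_def V0_def T0_def)
  have S1: "flux_ok P (th t) (ir t) (is t) (lr t) (ls t)"
    "((\<lambda>s. diagm (pM P) *v om s) has_vector_derivative
          (- (diagm (pD P) *v om t) - tau_e P (th t) (ir t) (is t) + fst (um, ur))) (at t within {0..T})"
    "(th has_vector_derivative om t) (at t within {0..T})"
    "(lr has_vector_derivative (- (diagm (pRr P) *v ir t) + snd (um, ur))) (at t within {0..T})"
    "(ls has_vector_derivative (- (RsM P *v is t) + v t)) (at t within {0..T})"
    "((\<lambda>s. CM P *v v s) has_vector_derivative
          (- (GM P *v v t) - EM P *v it t - is t)) (at t within {0..T})"
    "((\<lambda>s. LtM P *v it s) has_vector_derivative
          (- (RtM P *v it t) + transpose (EM P) *v v t)) (at t within {0..T})"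
    if "t \<in> {0..T}" for t
    using sol that unfolding is_solution_def by auto
  have S2: "flux_ok P (th2 t) (ir2 t) (is2 t) (lr2 t) (ls2 t)"
    "((\<lambda>s. diagm (pM P) *v om2 s) has_vector_derivative
          (- (diagm (pD P) *v om2 t) - tau_e P (th2 t) (ir2 t) (is2 t) + fst (um, ur))) (at t within {0..T})"
    "(th2 has_vector_derivative om2 t) (at t within {0..T})"
    "(lr2 has_vector_derivative (- (diagm (pRr P) *v ir2 t) + snd (um, ur))) (at t within {0..T})"
    "(ls2 has_vector_derivative (- (RsM P *v is2 t) + v2 t)) (at t within {0..T})"
    "((\<lambda>s. CM P *v v2 s) has_vector_derivative
          (- (GM P *v v2 t) - EM P *v it2 t - is2 t)) (at t within {0..T})"
    "((\<lambda>s. LtM P *v it2 s) has_vector_derivative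
          (- (RtM P *v it2 t) + transpose (EM P) *v v2 t)) (at t within {0..T})"
    if "t \<in> {0..T}" for t
    using es that unfolding is_solution_def by auto
  define z1 where "z1 = (\<lambda>t. Zv P (om t) (th t) (lr t) (ls t) (v t) (it t))"
  define f1 where "f1 = (\<lambda>t. Fv P (um, ur) (om t) (th t) (ir t) (is t) (v t) (it t))"
  define z2 where "z2 = (\<lambda>t. Zv P (om2 t) (th2 t) (lr2 t) (ls2 t) (v2 t) (it2 t))"
  define f2 where "f2 = (\<lambda>t. Fv P (um, ur) (om2 t) (th2 t) (ir2 t) (is2 t) (v2 t) (it2 t))"
  have d1: "(z1 has_vector_derivative f1 t) (at t within {0..T})" if "t \<in> {0..T}" for t
    unfolding z1_def f1_def Zv_def Fv_def
    using S1[OF that] by (intro has_vector_derivative_Pair) auto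
  have d2: "(z2 has_vector_derivative f2 t) (at t within {0..T})" if "t \<in> {0..T}" for t
    unfolding z2_def f2_def Zv_def Fv_def
    using S2[OF that] by (intro has_vector_derivative_Pair) auto
  have fl0: "lr 0 = LRf P irs th0 I0" "ls 0 = LSf P irs th0 I0"
    using S1(1)[of 0] T gp by (auto simp: flux_ok_iff th0_def I0_def)
  have z0: "z1 0 = z2 0"
    using gp fl0 by (simp add: z1_def z2_def Zv_def om2_def th2_def lr2_def ls2_def v2_def it2_def
        osc_zero th0_def I0_def V0_def T0_def)
  have clr: "continuous_on {0..T} lr" by (rule continuous_on_vector_derivative) (rule S1(4))
  have cls: "continuous_on {0..T} ls" by (rule continuous_on_vector_derivative) (rule S1(5))
  obtain Blr where Blr: "Blr \<ge> 0" "\<And>t. t \<in> {0..T} \<Longrightarrow> norm (lr t) \<le> Blr"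
    by (rule bounded_on_interval[OF clr]) blast
  obtain Bls where Bls: "Bls \<ge> 0" "\<And>t. t \<in> {0..T} \<Longrightarrow> norm (ls t) \<le> Bls"
    by (rule bounded_on_interval[OF cls]) blast
  obtain Kf where Kf: "Kf \<ge> 0" "\<And>th ir is. norm ir + norm is \<le> Kf * (norm (LRf P ir th is) + norm (LSf P ir th is))"
    using flux_bound[OF vp] by blast
  define B where "B = Kf * (Blr + Bls) + norm irs + (norm I0 + norm (bj *v I0))"
  have B0: "B \<ge> 0" using Kf Blr Bls by (simp add: B_def)
  have bis1: "norm (is t) \<le> B" if "t \<in> {0..T}" for t
  proof -
    have "norm (ir t) + norm (is t) \<le> Kf * (norm (lr t) + norm (ls t))"
      using Kf(2)[of "ir t" "is t" "th t"] S1(1)[OF that] by (simp add: flux_ok_iff)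
    also have "\<dots> \<le> Kf * (Blr + Bls)" using Blr(2)[OF that] Bls(2)[OF that] Kf(1)
      by (intro mult_left_mono add_mono) auto
    finally show ?thesis unfolding B_def by (smt (verit) norm_ge_zero)
  qed
  have bir2: "norm (ir2 t) \<le> B" for t
    using Kf(1) Blr(1) Bls(1) by (simp add: ir2_def B_def add_nonneg_nonneg)
  have bis2: "norm (is2 t) \<le> B" for t
  proof -
    have "norm (is2 t) \<le> norm I0 + norm (bj *v I0)" unfolding is2_def by (rule osc_norm)
    then show ?thesis unfolding B_def using Kf(1) Blr(1) Bls(1) by (smt (verit) norm_ge_zero mult_nonneg_nonneg)
  qed
  obtain L where L: "\<forall>om1 th1 lr1 ls1 v1 it1 ir1 is1 om2 th2 lr2 ls2 v2 it2 ir2 is2.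
     flux_ok P th1 ir1 is1 lr1 ls1 \<longrightarrow> flux_ok P th2 ir2 is2 lr2 ls2 \<longrightarrow>
     norm is1 \<le> B \<longrightarrow> norm ir2 \<le> B \<longrightarrow> norm is2 \<le> B \<longrightarrow>
     norm (Fv P (um, ur) om1 th1 ir1 is1 v1 it1 - Fv P (um, ur) om2 th2 ir2 is2 v2 it2)
       \<le> L * norm (Zv P om1 th1 lr1 ls1 v1 it1 - Zv P om2 th2 lr2 ls2 v2 it2)"
    using lip_point[OF vp B0, of "(um, ur)"] by blast
  have Lt: "norm (f1 t - f2 t) \<le> L * norm (z1 t - z2 t)" if "t \<in> {0..T}" for t
    unfolding f1_def f2_def z1_def z2_def
    using L S1(1)[OF that] S2(1)[OF that] bis1[OF that] bir2 bis2 by blast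
  have eq: "z1 t = z2 t" if "t \<in> {0..T}" for t
    by (rule ode_unique[OF T d1 d2 z0 Lt that])
  show ?thesis
  proof
    fix t assume t: "t \<in> {0..T}"
    have e: "om t = om2 t \<and> th t = th2 t \<and> lr t = lr2 t \<and> ls t = ls2 t \<and> v t = v2 t \<and> it t = it2 t"
      using Zv_inj[OF vp, of "om t" "th t" "lr t" "ls t" "v t" "it t"] eq[OF t] by (simp add: z1_def z2_def)
    have fe: "flux_ok P (th t) (ir2 t) (is2 t) (lr t) (ls t)" using S2(1)[OF t] e by simp
    have ie: "ir t = ir2 t \<and> is t = is2 t" by (rule flux_unique[OF vp S1(1)[OF t] fe])
    show "in_Gamma P w irs thdq (om t) (th t) (v t) (it t) (ir t) (is t)"
      using explicit_in_Gamma[OF vp w tq0, of irs t] e ie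
      by (simp add: om2_def th2_def v2_def it2_def ir2_def is2_def I0_def V0_def T0_def)
  qed
qed

theorem proposition2:
  fixes P :: "('n::finite, 'm::finite) mparams"
    and \<omega>0 :: real and irs \<theta>dq :: "real^'n" and um ur :: "real^'n"
  assumes "valid_params P" and "\<omega>0 > 0" and "\<forall>i. irs $ i > 0"
  shows "renders_invariant P \<omega>0 irs \<theta>dq (um, ur) \<longleftrightarrow>
           (ur = diagm (pRr P) *v irs \<and>
            um = (diagm (pD P) + Knet P \<omega>0 irs \<theta>dq) *v (\<omega>0 *\<^sub>R 1))"
proof
  assume "renders_invariant P \<omega>0 irs \<theta>dq (um, ur)"
  then show "ur = diagm (pRr P) *v irs \<and> um = (diagm (pD P) + Knet P \<omega>0 irs \<theta>dq) *v (\<omega>0 *\<^sub>R 1)"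
    by (rule necessity[OF assms(1,2)])
next
  assume h: "ur = diagm (pRr P) *v irs \<and> um = (diagm (pD P) + Knet P \<omega>0 irs \<theta>dq) *v (\<omega>0 *\<^sub>R 1)"
  then have ur: "ur = diagm (pRr P) *v irs" and um: "um = (diagm (pD P) + Knet P \<omega>0 irs \<theta>dq) *v (\<omega>0 *\<^sub>R 1)"
    by auto
  show "renders_invariant P \<omega>0 irs \<theta>dq (um, ur)"
    unfolding renders_invariant_def
  proof (intro conjI allI impI)
    fix om0 th0 lr0 ls0 v0 it0 ir0 is0
    assume "flux_ok P th0 ir0 is0 lr0 ls0 \<and> in_Gamma P \<omega>0 irs \<theta>dq om0 th0 v0 it0 ir0 is0"
    then show "\<exists>om th lr ls v it ir is.
          is_solution P (um, ur) {0..} om th lr ls v it ir is \<and>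
          om 0 = om0 \<and> th 0 = th0 \<and> lr 0 = lr0 \<and> ls 0 = ls0 \<and> v 0 = v0 \<and> it 0 = it0 \<and>
          (\<forall>t\<ge>0. in_Gamma P \<omega>0 irs \<theta>dq (om t) (th t) (v t) (it t) (ir t) (is t))"
      using existence_part[OF assms(1,2) ur um] by blast
  next
    fix T om th lr ls v it ir "is"
    assume "is_solution P (um, ur) {0..T} om th lr ls v it ir is \<and> 0 \<le> T \<and>
       in_Gamma P \<omega>0 irs \<theta>dq (om 0) (th 0) (v 0) (it 0) (ir 0) (is 0)"
    then show "\<forall>t\<in>{0..T}. in_Gamma P \<omega>0 irs \<theta>dq (om t) (th t) (v t) (it t) (ir t) (is t)"
      using uniqueness_part[OF assms(1,2) ur um] by blast
  qed
qed

end
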